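(* Let $X$ be a metric space with bounded geometry, $Y\subseteq X$ a subset, and $U\subseteq\beta X$ an invariant open subset; put $U^{\beta Y}=U\cap\beta Y$. Then, regarding $C^*(Y)$ as a subalgebra of $C^*(X)$, $$\mathcal I(Y,U^{\beta Y})=\mathcal I(X,U)\cap C^*(Y)\quad\text{and}\quad\mathcal G(Y,U^{\beta Y})=\mathcal G(X,U)\cap C^*(Y).$$
   Context: Metric spaces are discrete with bounded geometry. $\beta X$ is the Stone–Čech compactification; $\beta Y$ is identified with the closure of $Y$ in $\beta X$, and the coarse groupoid satisfies $G(Y)=G(X)\cap r^{-1}(\beta Y)\cap s^{-1}(\beta Y)$, where $G(X)=\bigcup_{R\ge0}\overline{\{(x,y):d(x,y)\le R\}}\subseteq\beta(X\times X)$ with range/source maps $r,s$ extending coordinate projections. $U$ is invariant if $r(\gamma)\in U\iff s(\gamma)\in U$ for all $\gamma\in G(X)$; then $U^{\beta Y}$ is $G(Y)$-invariant open. $\mathcal H$ is separable infinite-dimensional, $\mathcal H_X=\ell^2(X)\otimes\mathcal H$, and $C^*(Y)$ (built on $\ell^2(Y)\otimes\mathcal H\subseteq\mathcal H_X$) is viewed inside $C^*(X)$ by extending operators by $0$. $\mathbb C[X]$: finite-propagation operators with compact matrix entries $T_{xy}$; $C^*(X)$ its closure. With $\operatorname{supp}_\varepsilon(T)=\{(x,y):\|T_{xy}\|\ge\varepsilon\}$, $r$ the first-coordinate projection and closures in $\beta X$: $\mathcal I(X,U)$ is the closed ideal of $C^*(X)$ generated by $\{T\in\mathbb C[X]:\overline{r(\operatorname{supp}_\varepsilon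 T)}\subseteq U\ \forall\varepsilon>0\}$ and $\mathcal G(X,U)=\{T\in C^*(X):\overline{r(\operatorname{supp}_\varepsilon T)}\subseteq U\ \forall\varepsilon>0\}$; analogously for $Y$ with $U^{\beta Y}$. *)

theory Defs
  imports "HOL-Analysis.Analysis"
begin

definition is_ultrafilter :: "'b filter \<Rightarrow> bool" where
  "is_ultrafilter F \<longleftrightarrow> F \<noteq> bot \<and> (\<forall>P. eventually P F \<or> eventually (\<lambda>x. \<not> P x) F)"

text \<open>beta B: the Stone--Cech compactification of the discrete space B (all of the type),
  realised as the ultrafilters on B with the topology generated by the basic clopen sets.\<close>
definition beta_top :: "'b filter topology" where
  "beta_top = topology_generated_by
     {{F. is_ultrafilter F \<and> eventually (\<lambda>x. x \<in> A) F} | A. True}"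

definition pt :: "'b \<Rightarrow> 'b filter" where
  "pt x = principal {x}"

definition bclos :: "'b filter topology \<Rightarrow> 'b set \<Rightarrow> 'b filter set" where
  "bclos T A = T closure_of (pt ` A)"

text \<open>beta Y, identified with the closure of Y in beta X.\<close>
definition betaY :: "'b set \<Rightarrow> 'b filter set" where
  "betaY Y = bclos beta_top Y"

definition coarse_groupoid :: "('a::metric_space \<times> 'a) filter set" where
  "coarse_groupoid = (\<Union>R\<in>{R::real. R \<ge> 0}. bclos beta_top {(x, y). dist x y \<le> R})"

text \<open>Range and source: continuous extensions of the coordinate projections.\<close>
definition rng :: "('a \<times> 'a) filter \<Rightarrow> 'a filter" where "rng \<gamma> = filtermap fst \<gamma>"
definition src :: "('a \<times> 'a) filter \<Rightarrow> 'a filter" where "src \<gamma> = filtermap snd \<gamma>"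

definition invariant :: "'a::metric_space filter set \<Rightarrow> bool" where
  "invariant U \<longleftrightarrow> (\<forall>\<gamma>\<in>coarse_groupoid. rng \<gamma> \<in> U \<longleftrightarrow> src \<gamma> \<in> U)"

definition bounded_geometry :: "'a::metric_space itself \<Rightarrow> bool" where
  "bounded_geometry _ \<longleftrightarrow> (\<forall>R::real. \<exists>N::nat. \<forall>x::'a. finite (cball x R) \<and> card (cball x R) \<le> N)"

text \<open>An operator on l2(I) is represented by its matrix M p q = <e_p, T e_q>.\<close>

definition form_vals :: "('i \<Rightarrow> 'i \<Rightarrow> complex) \<Rightarrow> real set" where
  "form_vals M = {cmod (\<Sum>p\<in>F. \<Sum>q\<in>F. cnj (u p) * M p q * v q) | F u v.
      finite F \<and> (\<Sum>p\<in>F. (cmod (u p))\<^sup>2) \<le> 1 \<and> (\<Sum>p\<in>F. (cmod (v p))\<^sup>2) \<le> 1}"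

definition bounded_op :: "('i \<Rightarrow> 'i \<Rightarrow> complex) \<Rightarrow> bool" where
  "bounded_op M \<longleftrightarrow> bdd_above (form_vals M)"

definition opnorm :: "('i \<Rightarrow> 'i \<Rightarrow> complex) \<Rightarrow> real" where
  "opnorm M = Sup (form_vals M)"

definition mmul :: "('i \<Rightarrow> 'i \<Rightarrow> complex) \<Rightarrow> ('i \<Rightarrow> 'i \<Rightarrow> complex) \<Rightarrow> ('i \<Rightarrow> 'i \<Rightarrow> complex)" where
  "mmul M N = (\<lambda>p r. \<Sum>\<^sub>\<infinity>q. M p q * N q r)"

definition l2vec :: "('i \<Rightarrow> complex) \<Rightarrow> bool" where
  "l2vec u \<longleftrightarrow> (\<lambda>i. (cmod (u i))\<^sup>2) summable_on UNIV"

definition finite_rank :: "(nat \<Rightarrow> nat \<Rightarrow> complex) \<Rightarrow> bool" where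
  "finite_rank K \<longleftrightarrow> (\<exists>n::nat. \<exists>u v. (\<forall>k<n. l2vec (u k) \<and> l2vec (v k)) \<and>
       K = (\<lambda>i j. \<Sum>k<n. u k i * cnj (v k j)))"

definition compact_op :: "(nat \<Rightarrow> nat \<Rightarrow> complex) \<Rightarrow> bool" where
  "compact_op K \<longleftrightarrow> bounded_op K \<and> (\<forall>e>0. \<exists>F. finite_rank F \<and> opnorm (\<lambda>i j. K i j - F i j) < e)"

definition entry :: "('a \<times> nat \<Rightarrow> 'a \<times> nat \<Rightarrow> complex) \<Rightarrow> 'a \<Rightarrow> 'a \<Rightarrow> (nat \<Rightarrow> nat \<Rightarrow> complex)" where
  "entry T x y = (\<lambda>i j. T (x, i) (y, j))"

text \<open>Operators on l2(Z) \<otimes> H, extended by 0 to H_X.\<close>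
definition supported_in :: "'a set \<Rightarrow> ('a \<times> nat \<Rightarrow> 'a \<times> nat \<Rightarrow> complex) \<Rightarrow> bool" where
  "supported_in Z T \<longleftrightarrow> (\<forall>p q. T p q \<noteq> 0 \<longrightarrow> fst p \<in> Z \<and> fst q \<in> Z)"

definition alg_roe :: "'a::metric_space set \<Rightarrow> ('a \<times> nat \<Rightarrow> 'a \<times> nat \<Rightarrow> complex) set" where
  "alg_roe Z = {T. bounded_op T \<and> supported_in Z T \<and>
      (\<exists>R. \<forall>x y. dist x y > R \<longrightarrow> entry T x y = (\<lambda>i j. 0)) \<and>
      (\<forall>x y. compact_op (entry T x y))}"

definition roe :: "'a::metric_space set \<Rightarrow> ('a \<times> nat \<Rightarrow> 'a \<times> nat \<Rightarrow> complex) set" where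
  "roe Z = {M. bounded_op M \<and> (\<forall>e>0. \<exists>T\<in>alg_roe Z. opnorm (\<lambda>p q. M p q - T p q) < e)}"

definition supp_eps :: "real \<Rightarrow> ('a \<times> nat \<Rightarrow> 'a \<times> nat \<Rightarrow> complex) \<Rightarrow> ('a \<times> 'a) set" where
  "supp_eps e T = {(x, y). opnorm (entry T x y) \<ge> e}"

definition closed_ideal_gen :: "('i \<Rightarrow> 'i \<Rightarrow> complex) set \<Rightarrow> ('i \<Rightarrow> 'i \<Rightarrow> complex) set \<Rightarrow> ('i \<Rightarrow> 'i \<Rightarrow> complex) set" where
  "closed_ideal_gen A S = \<Inter>{J. J \<subseteq> A \<and> S \<subseteq> J \<and>
      (\<forall>a\<in>J. \<forall>b\<in>J. (\<lambda>p q. a p q + b p q) \<in> J) \<and> (\<forall>c::complex. \<forall>a\<in>J. (\<lambda>p q. c * a p q) \<in> J) \<and>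
      (\<forall>a\<in>J. \<forall>b\<in>A. mmul a b \<in> J \<and> mmul b a \<in> J) \<and>
      (\<forall>M\<in>A. (\<forall>e>0. \<exists>T\<in>J. opnorm (\<lambda>p q. M p q - T p q) < e) \<longrightarrow> M \<in> J)}"

definition ideal_I :: "'a filter topology \<Rightarrow> 'a::metric_space set \<Rightarrow> 'a filter set \<Rightarrow> ('a \<times> nat \<Rightarrow> 'a \<times> nat \<Rightarrow> complex) set" where
  "ideal_I T Z V = closed_ideal_gen (roe Z)
     {S\<in>alg_roe Z. \<forall>e>0. bclos T (fst ` supp_eps e S) \<subseteq> V}"

definition ideal_G :: "'a filter topology \<Rightarrow> 'a::metric_space set \<Rightarrow> 'a filter set \<Rightarrow> ('a \<times> nat \<Rightarrow> 'a \<times> nat \<Rightarrow> complex) set" where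
  "ideal_G T Z V = {S\<in>roe Z. \<forall>e>0. bclos T (fst ` supp_eps e S) \<subseteq> V}"

end

theory Submission
  imports Defs
begin

definition fv2 :: "('i \<Rightarrow> 'i \<Rightarrow> complex) \<Rightarrow> 'i set \<Rightarrow> 'i set \<Rightarrow> ('i \<Rightarrow> complex) \<Rightarrow> ('i \<Rightarrow> complex) \<Rightarrow> complex" where
  "fv2 M A B u v = (\<Sum>p\<in>A. \<Sum>q\<in>B. cnj (u p) * M p q * v q)"

definition nF :: "'i set \<Rightarrow> ('i \<Rightarrow> complex) \<Rightarrow> real" where
  "nF A u = sqrt (\<Sum>p\<in>A. (cmod (u p))\<^sup>2)"

lemma nF_nonneg: "nF A u \<ge> 0"
  unfolding nF_def by (simp add: sum_nonneg)

lemma nF_zero: assumes "finite A" "nF A u = 0" "p \<in> A" shows "u p = 0"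
proof -
  have "(\<Sum>p\<in>A. (cmod (u p))\<^sup>2) = 0" using assms(2) unfolding nF_def by simp
  then have "\<forall>p\<in>A. (cmod (u p))\<^sup>2 = 0" using assms(1) by (subst (asm) sum_nonneg_eq_0_iff) auto
  then show ?thesis using assms(3) by auto
qed

lemma form_vals_0: "0 \<in> form_vals M"
  unfolding form_vals_def by (rule CollectI, rule exI[of _ "{}"]) auto

lemma form_vals_nonneg: "x \<in> form_vals M \<Longrightarrow> 0 \<le> x"
  unfolding form_vals_def by auto

lemma form_vals_le_opnorm: "bounded_op M \<Longrightarrow> x \<in> form_vals M \<Longrightarrow> x \<le> opnorm M"
  unfolding bounded_op_def opnorm_def by (rule cSup_upper)

lemma opnorm_nonneg: "bounded_op M \<Longrightarrow> 0 \<le> opnorm M"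
  using form_vals_le_opnorm form_vals_0 by blast

lemma fv_in_form_vals:
  assumes "finite F" "(\<Sum>p\<in>F. (cmod (u p))\<^sup>2) \<le> 1" "(\<Sum>p\<in>F. (cmod (v p))\<^sup>2) \<le> 1"
  shows "cmod (\<Sum>p\<in>F. \<Sum>q\<in>F. cnj (u p) * M p q * v q) \<in> form_vals M"
  unfolding form_vals_def using assms by blast

lemma fv2_bound:
  assumes M: "bounded_op M" and A: "finite A" and B: "finite B"
  shows "cmod (fv2 M A B u v) \<le> opnorm M * nF A u * nF B v"
proof (cases "nF A u = 0 \<or> nF B v = 0")
  case True
  then have "fv2 M A B u v = 0"
  proof
    assume "nF A u = 0" then have "\<forall>p\<in>A. u p = 0" using nF_zero[OF A] by metis
    then show ?thesis unfolding fv2_def by simp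
  next
    assume "nF B v = 0" then have "\<forall>p\<in>B. v p = 0" using nF_zero[OF B] by metis
    then show ?thesis unfolding fv2_def by simp
  qed
  then show ?thesis using opnorm_nonneg[OF M] nF_nonneg[of A u] nF_nonneg[of B v] by simp
next
  case False
  define a where "a = nF A u"
  define b where "b = nF B v"
  have a0: "a > 0" and b0: "b > 0" using False nF_nonneg unfolding a_def b_def
    by (metis less_eq_real_def)+
  define u' where "u' p = (if p \<in> A then u p / a else 0)" for p
  define v' where "v' p = (if p \<in> B then v p / b else 0)" for p
  define F where "F = A \<union> B"
  have F: "finite F" unfolding F_def using assms(2,3) by simp
  have "(\<Sum>p\<in>F. \<Sum>q\<in>F. cnj (u' p) * M p q * v' q) = (\<Sum>p\<in>A. \<Sum>q\<in>F. cnj (u' p) * M p q * v' q)"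
    by (rule sum.mono_neutral_right) (auto simp: F_def assms(2,3) u'_def)
  also have "\<dots> = (\<Sum>p\<in>A. \<Sum>q\<in>B. cnj (u' p) * M p q * v' q)"
    by (rule sum.cong[OF refl], rule sum.mono_neutral_right) (auto simp: F_def assms(2,3) v'_def)
  also have "\<dots> = (\<Sum>p\<in>A. \<Sum>q\<in>B. (cnj (u p) * M p q * v q) / (a * b))"
    by (rule sum.cong[OF refl], rule sum.cong[OF refl]) (simp add: u'_def v'_def)
  also have "\<dots> = fv2 M A B u v / (a * b)"
    unfolding fv2_def by (simp add: sum_divide_distrib)
  finally have eq: "(\<Sum>p\<in>F. \<Sum>q\<in>F. cnj (u' p) * M p q * v' q) = fv2 M A B u v / (a * b)" .
  have nu: "(\<Sum>p\<in>F. (cmod (u' p))\<^sup>2) \<le> 1"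
  proof -
    have "(\<Sum>p\<in>F. (cmod (u' p))\<^sup>2) = (\<Sum>p\<in>A. (cmod (u' p))\<^sup>2)"
      by (rule sum.mono_neutral_right) (auto simp: F_def assms(2,3) u'_def)
    also have "\<dots> = (\<Sum>p\<in>A. (cmod (u p))\<^sup>2 / a\<^sup>2)"
      by (rule sum.cong[OF refl]) (simp add: u'_def norm_divide power_divide)
    also have "\<dots> = (\<Sum>p\<in>A. (cmod (u p))\<^sup>2) / a\<^sup>2"
      by (simp add: sum_divide_distrib)
    also have "\<dots> = 1"
    proof -
      have "a\<^sup>2 = (\<Sum>p\<in>A. (cmod (u p))\<^sup>2)" unfolding a_def nF_def
        by (simp add: sum_nonneg)
      then show ?thesis using a0 by (metis divide_self power_not_zero less_irrefl)
    qed
    finally show ?thesis by simp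
  qed
  have nv: "(\<Sum>p\<in>F. (cmod (v' p))\<^sup>2) \<le> 1"
  proof -
    have "(\<Sum>p\<in>F. (cmod (v' p))\<^sup>2) = (\<Sum>p\<in>B. (cmod (v' p))\<^sup>2)"
      by (rule sum.mono_neutral_right) (auto simp: F_def assms(2,3) v'_def)
    also have "\<dots> = (\<Sum>p\<in>B. (cmod (v p))\<^sup>2 / b\<^sup>2)"
      by (rule sum.cong[OF refl]) (simp add: v'_def norm_divide power_divide)
    also have "\<dots> = (\<Sum>p\<in>B. (cmod (v p))\<^sup>2) / b\<^sup>2"
      by (simp add: sum_divide_distrib)
    also have "\<dots> = 1"
    proof -
      have "b\<^sup>2 = (\<Sum>p\<in>B. (cmod (v p))\<^sup>2)" unfolding b_def nF_def
        by (simp add: sum_nonneg)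
      then show ?thesis using b0 by (metis divide_self power_not_zero less_irrefl)
    qed
    finally show ?thesis by simp
  qed
  have "cmod (fv2 M A B u v / (a * b)) \<le> opnorm M"
    using form_vals_le_opnorm[OF M fv_in_form_vals[OF F nu nv, of M]] eq by simp
  then have "cmod (fv2 M A B u v) / (a * b) \<le> opnorm M"
    using a0 b0 by (simp add: norm_divide norm_mult)
  then show ?thesis using a0 b0 unfolding a_def[symmetric] b_def[symmetric]
    by (simp add: divide_le_eq mult.assoc)
qed

lemma opnorm_leI:
  assumes c: "0 \<le> c"
    and H: "\<And>A B u v. finite A \<Longrightarrow> finite B \<Longrightarrow> cmod (fv2 M A B u v) \<le> c * nF A u * nF B v"
  shows "bounded_op M \<and> opnorm M \<le> c"
proof -
  have le: "x \<le> c" if xin: "x \<in> form_vals M" for x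
  proof -
    obtain F u v where x: "x = cmod (\<Sum>p\<in>F. \<Sum>q\<in>F. cnj (u p) * M p q * v q)" and F: "finite F"
      and u: "(\<Sum>p\<in>F. (cmod (u p))\<^sup>2) \<le> 1" and v: "(\<Sum>p\<in>F. (cmod (v p))\<^sup>2) \<le> 1"
      using xin[unfolded form_vals_def] by blast
    have "x \<le> c * nF F u * nF F v" using H[OF F F, of u v] x unfolding fv2_def by simp
    also have "\<dots> \<le> c * 1 * 1"
      using u v c nF_nonneg unfolding nF_def
      by (intro mult_mono) (auto simp: mult_le_one)
    finally show ?thesis by simp
  qed
  have "bounded_op M" unfolding bounded_op_def by (rule bdd_aboveI[where M=c]) (rule le)
  moreover have "opnorm M \<le> c" unfolding opnorm_def using le form_vals_0
    by (intro cSup_least) auto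
  ultimately show ?thesis by simp
qed

lemma fv2_add: "fv2 (\<lambda>p q. M p q + N p q) A B u v = fv2 M A B u v + fv2 N A B u v"
  unfolding fv2_def by (simp add: distrib_left distrib_right sum.distrib)

lemma fv2_diff: "fv2 (\<lambda>p q. M p q - N p q) A B u v = fv2 M A B u v - fv2 N A B u v"
  unfolding fv2_def by (simp add: right_diff_distrib left_diff_distrib sum_subtractf)

lemma fv2_scale: "fv2 (\<lambda>p q. c * M p q) A B u v = c * fv2 M A B u v"
  unfolding fv2_def by (simp add: sum_distrib_left mult.assoc mult.left_commute)

lemma opnorm_mono_fv:
  fixes M N :: "'i \<Rightarrow> 'i \<Rightarrow> complex"
  assumes M: "bounded_op M"
    and H: "\<And>A B u v. finite A \<Longrightarrow> finite B \<Longrightarrow> cmod (fv2 N A B u v) \<le> c * cmod (fv2 M A B u v)"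
    and c: "0 \<le> c"
  shows "bounded_op N \<and> opnorm N \<le> c * opnorm M"
proof (rule opnorm_leI)
  show "0 \<le> c * opnorm M" using c opnorm_nonneg[OF M] by simp
  fix A B :: "'i set" and u v :: "'i \<Rightarrow> complex" assume A: "finite A" and B: "finite B"
  have "cmod (fv2 N A B u v) \<le> c * cmod (fv2 M A B u v)" using H A B .
  also have "\<dots> \<le> c * (opnorm M * nF A u * nF B v)"
    using fv2_bound[OF M A B] c by (rule mult_left_mono)
  finally show "cmod (fv2 N A B u v) \<le> c * opnorm M * nF A u * nF B v" by (simp add: mult.assoc)
qed

lemma opnorm_add:
  fixes M N :: "'i \<Rightarrow> 'i \<Rightarrow> complex"
  assumes M: "bounded_op M" and N: "bounded_op N"
  shows "bounded_op (\<lambda>p q. M p q + N p q) \<and> opnorm (\<lambda>p q. M p q + N p q) \<le> opnorm M + opnorm N"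
proof (rule opnorm_leI)
  show "0 \<le> opnorm M + opnorm N" using opnorm_nonneg[OF M] opnorm_nonneg[OF N] by simp
  fix A B :: "'i set" and u v :: "'i \<Rightarrow> complex" assume A: "finite A" and B: "finite B"
  have "cmod (fv2 (\<lambda>p q. M p q + N p q) A B u v) \<le> cmod (fv2 M A B u v) + cmod (fv2 N A B u v)"
    unfolding fv2_add by (rule norm_triangle_ineq)
  also have "\<dots> \<le> opnorm M * nF A u * nF B v + opnorm N * nF A u * nF B v"
    using fv2_bound[OF M A B] fv2_bound[OF N A B] by (rule add_mono)
  finally show "cmod (fv2 (\<lambda>p q. M p q + N p q) A B u v) \<le> (opnorm M + opnorm N) * nF A u * nF B v"
    by (simp add: algebra_simps)
qed

lemma opnorm_diff:
  fixes M N :: "'i \<Rightarrow> 'i \<Rightarrow> complex"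
  assumes M: "bounded_op M" and N: "bounded_op N"
  shows "bounded_op (\<lambda>p q. M p q - N p q) \<and> opnorm (\<lambda>p q. M p q - N p q) \<le> opnorm M + opnorm N"
proof (rule opnorm_leI)
  show "0 \<le> opnorm M + opnorm N" using opnorm_nonneg[OF M] opnorm_nonneg[OF N] by simp
  fix A B :: "'i set" and u v :: "'i \<Rightarrow> complex" assume A: "finite A" and B: "finite B"
  have "cmod (fv2 (\<lambda>p q. M p q - N p q) A B u v) \<le> cmod (fv2 M A B u v) + cmod (fv2 N A B u v)"
    unfolding fv2_diff by (rule norm_triangle_ineq4)
  also have "\<dots> \<le> opnorm M * nF A u * nF B v + opnorm N * nF A u * nF B v"
    using fv2_bound[OF M A B] fv2_bound[OF N A B] by (rule add_mono)
  finally show "cmod (fv2 (\<lambda>p q. M p q - N p q) A B u v) \<le> (opnorm M + opnorm N) * nF A u * nF B v"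
    by (simp add: algebra_simps)
qed

lemma opnorm_scale:
  assumes M: "bounded_op M"
  shows "bounded_op (\<lambda>p q. c * M p q) \<and> opnorm (\<lambda>p q. c * M p q) \<le> cmod c * opnorm M"
  by (rule opnorm_mono_fv[OF M]) (auto simp: fv2_scale norm_mult)

lemma opnorm_zero: "bounded_op (\<lambda>p q::'i. 0::complex) \<and> opnorm (\<lambda>p q::'i. 0::complex) = 0"
proof -
  have "bounded_op (\<lambda>p q::'i. 0::complex) \<and> opnorm (\<lambda>p q::'i. 0::complex) \<le> 0"
    by (rule opnorm_leI) (auto simp: fv2_def)
  then show ?thesis using opnorm_nonneg[of "\<lambda>p q::'i. 0::complex"] by auto
qed

lemma opnorm_triangle:
  assumes "bounded_op (\<lambda>p q. M p q - N p q)" "bounded_op (\<lambda>p q. N p q - P p q)"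
  shows "bounded_op (\<lambda>p q. M p q - P p q) \<and> opnorm (\<lambda>p q. M p q - P p q)
     \<le> opnorm (\<lambda>p q. M p q - N p q) + opnorm (\<lambda>p q. N p q - P p q)"
  using opnorm_add[OF assms] by simp

lemma opnorm_sym:
  assumes "bounded_op (\<lambda>p q. M p q - N p q)"
  shows "bounded_op (\<lambda>p q. N p q - M p q) \<and> opnorm (\<lambda>p q. N p q - M p q) = opnorm (\<lambda>p q. M p q - N p q)"
proof -
  have h: "bounded_op (\<lambda>p q. N p q - M p q) \<and> opnorm (\<lambda>p q. N p q - M p q) \<le> 1 * opnorm (\<lambda>p q. M p q - N p q)"
    by (rule opnorm_mono_fv[OF assms]) (auto simp: fv2_diff norm_minus_commute)
  have "bounded_op (\<lambda>p q. M p q - N p q) \<and> opnorm (\<lambda>p q. M p q - N p q) \<le> 1 * opnorm (\<lambda>p q. N p q - M p q)"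
    by (rule opnorm_mono_fv) (use h in \<open>auto simp: fv2_diff norm_minus_commute\<close>)
  then show ?thesis using h by simp
qed

lemma entry_le_opnorm:
  assumes M: "bounded_op M" shows "cmod (M p q) \<le> opnorm M"
proof -
  have "cmod (fv2 M {p} {q} (\<lambda>_. 1) (\<lambda>_. 1)) \<le> opnorm M * nF {p} (\<lambda>_. 1) * nF {q} (\<lambda>_. 1)"
    by (rule fv2_bound[OF M]) auto
  then show ?thesis by (simp add: fv2_def nF_def)
qed

lemma sum_sq_inter_le: "finite A \<Longrightarrow> (\<Sum>p\<in>A \<inter> S. (cmod (u p))\<^sup>2) \<le> (\<Sum>p\<in>A. (cmod (u p))\<^sup>2)"
  by (rule sum_mono2) auto

lemma nF_inter_le: "finite A \<Longrightarrow> nF (A \<inter> S) u \<le> nF A u"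
  unfolding nF_def by (rule real_sqrt_le_mono, rule sum_sq_inter_le)

lemma opnorm_mask:
  fixes M :: "'i \<Rightarrow> 'i \<Rightarrow> complex"
  assumes M: "bounded_op M"
  shows "bounded_op (\<lambda>p q. if P p \<and> Q q then M p q else 0)
    \<and> opnorm (\<lambda>p q. if P p \<and> Q q then M p q else 0) \<le> opnorm M"
proof (rule opnorm_leI)
  show "0 \<le> opnorm M" using opnorm_nonneg[OF M] .
  fix A B :: "'i set" and u v :: "'i \<Rightarrow> complex" assume A: "finite A" and B: "finite B"
  have "fv2 (\<lambda>p q. if P p \<and> Q q then M p q else 0) A B u v = fv2 M (A \<inter> Collect P) (B \<inter> Collect Q) u v"
    unfolding fv2_def sum.inter_restrict[OF A] sum.inter_restrict[OF B]
  proof (rule sum.cong[OF refl])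
    fix p assume "p \<in> A"
    show "(\<Sum>q\<in>B. cnj (u p) * (if P p \<and> Q q then M p q else 0) * v q) =
      (if p \<in> Collect P then \<Sum>q\<in>B. if q \<in> Collect Q then cnj (u p) * M p q * v q else 0 else 0)"
      by (cases "P p") (auto intro!: sum.cong)
  qed
  also have "cmod \<dots> \<le> opnorm M * nF (A \<inter> Collect P) u * nF (B \<inter> Collect Q) v"
    using A B by (intro fv2_bound[OF M]) auto
  also have "\<dots> \<le> opnorm M * nF A u * nF B v"
    using opnorm_nonneg[OF M] nF_inter_le[OF A] nF_inter_le[OF B] nF_nonneg
    by (intro mult_mono mult_nonneg_nonneg) auto
  finally show "cmod (fv2 (\<lambda>p q. if P p \<and> Q q then M p q else 0) A B u v) \<le> opnorm M * nF A u * nF B v" .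
qed

lemma fv2_entry:
  "fv2 (entry M x y) A B u v = fv2 M (Pair x ` A) (Pair y ` B) (\<lambda>p. u (snd p)) (\<lambda>q. v (snd q))"
  unfolding fv2_def entry_def
  by (simp add: sum.reindex inj_on_def)

lemma nF_Pair: "nF (Pair x ` A) (\<lambda>p. u (snd p)) = nF A u"
  unfolding nF_def by (simp add: sum.reindex inj_on_def)

lemma opnorm_entry:
  fixes M :: "'a \<times> nat \<Rightarrow> 'a \<times> nat \<Rightarrow> complex"
  assumes M: "bounded_op M"
  shows "bounded_op (entry M x y) \<and> opnorm (entry M x y) \<le> opnorm M"
proof (rule opnorm_leI)
  show "0 \<le> opnorm M" using opnorm_nonneg[OF M] .
  fix A B :: "nat set" and u v :: "nat \<Rightarrow> complex" assume A: "finite A" and B: "finite B"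
  show "cmod (fv2 (entry M x y) A B u v) \<le> opnorm M * nF A u * nF B v"
    unfolding fv2_entry using fv2_bound[OF M, of "Pair x ` A" "Pair y ` B" "\<lambda>p. u (snd p)" "\<lambda>q. v (snd q)"] A B
    by (simp add: nF_Pair)
qed

lemma sq_le_aux:
  fixes s K :: real
  assumes "0 \<le> s" "0 \<le> K" "s \<le> K * sqrt s"
  shows "s \<le> K\<^sup>2"
proof (cases "s = 0")
  case True then show ?thesis by simp
next
  case False
  then have sp: "sqrt s > 0" using assms(1) by simp
  have "sqrt s * sqrt s \<le> K * sqrt s" using assms(1,3) by simp
  then have "sqrt s \<le> K" by (rule mult_right_le_imp_le[OF _ sp])
  then have "(sqrt s)\<^sup>2 \<le> K\<^sup>2" using sp by (intro power_mono) auto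
  then show ?thesis using assms(1) by simp
qed

lemma row_sq:
  fixes M :: "'i \<Rightarrow> 'i \<Rightarrow> complex"
  assumes M: "bounded_op M" and A: "finite A" and G: "finite G"
  shows "(\<Sum>q\<in>G. (cmod (\<Sum>p\<in>A. cnj (u p) * M p q))\<^sup>2) \<le> (opnorm M * nF A u)\<^sup>2"
proof -
  define a where "a q = (\<Sum>p\<in>A. cnj (u p) * M p q)" for q
  define s where "s = (\<Sum>q\<in>G. (cmod (a q))\<^sup>2)"
  have "fv2 M A G u (\<lambda>q. cnj (a q)) = (\<Sum>q\<in>G. \<Sum>p\<in>A. cnj (u p) * M p q * cnj (a q))"
    unfolding fv2_def by (rule sum.swap)
  also have "\<dots> = (\<Sum>q\<in>G. a q * cnj (a q))"
    unfolding a_def by (simp add: sum_distrib_right)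
  also have "\<dots> = of_real s"
    unfolding s_def of_real_sum by (rule sum.cong[OF refl]) (rule complex_norm_square[symmetric])
  finally have fv: "fv2 M A G u (\<lambda>q. cnj (a q)) = of_real s" .
  have s0: "0 \<le> s" unfolding s_def by (simp add: sum_nonneg)
  have nF: "nF G (\<lambda>q. cnj (a q)) = sqrt s" unfolding nF_def s_def by simp
  have "cmod (fv2 M A G u (\<lambda>q. cnj (a q))) \<le> opnorm M * nF A u * nF G (\<lambda>q. cnj (a q))"
    by (rule fv2_bound[OF M A G])
  then have "s \<le> (opnorm M * nF A u) * sqrt s" using fv nF s0 by simp
  then have "s \<le> (opnorm M * nF A u)\<^sup>2"
    using s0 mult_nonneg_nonneg[OF opnorm_nonneg[OF M] nF_nonneg] by (intro sq_le_aux) auto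
  then show ?thesis unfolding s_def a_def .
qed

lemma col_sq:
  fixes M :: "'i \<Rightarrow> 'i \<Rightarrow> complex"
  assumes M: "bounded_op M" and B: "finite B" and G: "finite G"
  shows "(\<Sum>p\<in>G. (cmod (\<Sum>q\<in>B. M p q * v q))\<^sup>2) \<le> (opnorm M * nF B v)\<^sup>2"
proof -
  define b where "b p = (\<Sum>q\<in>B. M p q * v q)" for p
  define s where "s = (\<Sum>p\<in>G. (cmod (b p))\<^sup>2)"
  have "fv2 M G B b v = (\<Sum>p\<in>G. cnj (b p) * b p)"
    unfolding fv2_def b_def by (simp add: sum_distrib_left mult.assoc)
  also have "\<dots> = of_real s"
    unfolding s_def of_real_sum by (rule sum.cong[OF refl]) (subst mult.commute, rule complex_norm_square[symmetric])
  finally have fv: "fv2 M G B b v = of_real s" .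
  have s0: "0 \<le> s" unfolding s_def by (simp add: sum_nonneg)
  have nF: "nF G b = sqrt s" unfolding nF_def s_def by simp
  have "cmod (fv2 M G B b v) \<le> opnorm M * nF G b * nF B v"
    by (rule fv2_bound[OF M G B])
  then have "s \<le> (opnorm M * nF B v) * sqrt s" using fv nF s0 by (simp add: mult_ac)
  then have "s \<le> (opnorm M * nF B v)\<^sup>2"
    using s0 mult_nonneg_nonneg[OF opnorm_nonneg[OF M] nF_nonneg] by (intro sq_le_aux) auto
  then show ?thesis unfolding s_def b_def .
qed

lemma row_entries:
  assumes M: "bounded_op M" and G: "finite G"
  shows "(\<Sum>q\<in>G. (cmod (M p q))\<^sup>2) \<le> (opnorm M)\<^sup>2"
  using row_sq[OF M _ G, of "{p}" "\<lambda>_. 1"] by (simp add: nF_def)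

lemma col_entries:
  assumes M: "bounded_op M" and G: "finite G"
  shows "(\<Sum>p\<in>G. (cmod (M p q))\<^sup>2) \<le> (opnorm M)\<^sup>2"
  using col_sq[OF M _ G, of "{q}" "\<lambda>_. 1"] by (simp add: nF_def)

lemma finite_CS:
  fixes x y :: "'i \<Rightarrow> complex"
  shows "(\<Sum>q\<in>G. cmod (x q * y q)) \<le> sqrt (\<Sum>q\<in>G. (cmod (x q))\<^sup>2) * sqrt (\<Sum>q\<in>G. (cmod (y q))\<^sup>2)"
proof -
  have "(\<Sum>q\<in>G. cmod (x q) * cmod (y q))\<^sup>2 \<le> (\<Sum>q\<in>G. (cmod (x q))\<^sup>2) * (\<Sum>q\<in>G. (cmod (y q))\<^sup>2)"
    by (rule Cauchy_Schwarz_ineq_sum)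
  then have "sqrt ((\<Sum>q\<in>G. cmod (x q) * cmod (y q))\<^sup>2) \<le> sqrt ((\<Sum>q\<in>G. (cmod (x q))\<^sup>2) * (\<Sum>q\<in>G. (cmod (y q))\<^sup>2))"
    by (rule real_sqrt_le_mono)
  moreover have "(\<Sum>q\<in>G. cmod (x q) * cmod (y q)) \<ge> 0" by (simp add: sum_nonneg)
  ultimately show ?thesis by (simp add: norm_mult real_sqrt_mult)
qed

lemma CS_bound:
  fixes x y :: "'i \<Rightarrow> complex"
  assumes X: "0 \<le> X" and Y: "0 \<le> Y"
    and hx: "\<And>G. finite G \<Longrightarrow> (\<Sum>q\<in>G. (cmod (x q))\<^sup>2) \<le> X\<^sup>2"
    and hy: "\<And>G. finite G \<Longrightarrow> (\<Sum>q\<in>G. (cmod (y q))\<^sup>2) \<le> Y\<^sup>2"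
  shows "(\<lambda>q. x q * y q) summable_on UNIV \<and> cmod (infsum (\<lambda>q. x q * y q) UNIV) \<le> X * Y"
proof -
  have fin: "(\<Sum>q\<in>G. cmod (x q * y q)) \<le> X * Y" if G: "finite G" for G
  proof -
    have "(\<Sum>q\<in>G. cmod (x q * y q)) \<le> sqrt (\<Sum>q\<in>G. (cmod (x q))\<^sup>2) * sqrt (\<Sum>q\<in>G. (cmod (y q))\<^sup>2)"
      by (rule finite_CS)
    also have "\<dots> \<le> sqrt (X\<^sup>2) * sqrt (Y\<^sup>2)"
      using hx[OF G] hy[OF G] by (intro mult_mono real_sqrt_le_mono) (auto simp: sum_nonneg)
    also have "\<dots> = X * Y" using X Y by simp
    finally show ?thesis .
  qed
  have abs: "(\<lambda>q. cmod (x q * y q)) summable_on UNIV"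
    by (rule nonneg_bdd_above_summable_on) (auto intro!: bdd_aboveI[where M="X*Y"] fin)
  then have sm: "(\<lambda>q. x q * y q) summable_on UNIV" by (rule abs_summable_summable)
  have "cmod (infsum (\<lambda>q. x q * y q) UNIV) \<le> infsum (\<lambda>q. cmod (x q * y q)) UNIV"
    using abs by (rule norm_infsum_bound)
  also have "\<dots> \<le> X * Y" using abs by (rule infsum_le_finite_sums) (rule fin)
  finally show ?thesis using sm by simp
qed

lemma mmul_summable:
  assumes M: "bounded_op M" and N: "bounded_op N"
  shows "(\<lambda>q. M p q * N q r) summable_on UNIV"
  using CS_bound[of "opnorm M" "opnorm N" "\<lambda>q. M p q" "\<lambda>q. N q r"]
    opnorm_nonneg[OF M] opnorm_nonneg[OF N] row_entries[OF M] col_entries[OF N] by blast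

lemma infsum_diff':
  fixes f g :: "'i \<Rightarrow> complex"
  assumes "f summable_on A" "g summable_on A"
  shows "infsum (\<lambda>x. f x - g x) A = infsum f A - infsum g A"
proof -
  have "(\<lambda>x. - g x) summable_on A" using assms(2) by (simp add: summable_on_uminus)
  then have "infsum (\<lambda>x. f x + - g x) A = infsum f A + infsum (\<lambda>x. - g x) A"
    using assms(1) by (intro infsum_add) auto
  then show ?thesis by (simp add: infsum_uminus)
qed

lemma summable_on_sum':
  fixes f :: "'k \<Rightarrow> 'i \<Rightarrow> complex"
  assumes "finite K" "\<And>k. k \<in> K \<Longrightarrow> f k summable_on A"
  shows "(\<lambda>x. \<Sum>k\<in>K. f k x) summable_on A"
  using assms by (induction K rule: finite_induct) (auto intro!: summable_on_add)

lemma infsum_sum':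
  fixes f :: "'k \<Rightarrow> 'i \<Rightarrow> complex"
  assumes "finite K" "\<And>k. k \<in> K \<Longrightarrow> f k summable_on A"
  shows "infsum (\<lambda>x. \<Sum>k\<in>K. f k x) A = (\<Sum>k\<in>K. infsum (f k) A)"
  using assms
proof (induction K rule: finite_induct)
  case empty then show ?case by simp
next
  case (insert k K)
  have "infsum (\<lambda>x. \<Sum>k\<in>insert k K. f k x) A = infsum (\<lambda>x. f k x + (\<Sum>k\<in>K. f k x)) A"
    using insert.hyps by simp
  also have "\<dots> = infsum (f k) A + infsum (\<lambda>x. \<Sum>k\<in>K. f k x) A"
    using insert.prems insert.hyps by (intro infsum_add summable_on_sum') auto
  also have "\<dots> = infsum (f k) A + (\<Sum>k\<in>K. infsum (f k) A)"
    using insert by simp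
  finally show ?case using insert.hyps by simp
qed

lemma infsum_cmult_both:
  fixes f :: "'i \<Rightarrow> complex"
  assumes "f summable_on A"
  shows "c * infsum f A * d = infsum (\<lambda>x. c * f x * d) A"
proof -
  have "c * infsum f A = infsum (\<lambda>x. c * f x) A" using assms by (simp add: infsum_cmult_right)
  moreover have "infsum (\<lambda>x. c * f x) A * d = infsum (\<lambda>x. c * f x * d) A"
    using assms by (intro infsum_cmult_left[symmetric]) (simp add: summable_on_cmult_right)
  ultimately show ?thesis by simp
qed

lemma fv2_mmul:
  assumes M: "bounded_op M" and N: "bounded_op N" and A: "finite A" and B: "finite B"
  shows "fv2 (mmul M N) A B u v = infsum (\<lambda>q. (\<Sum>p\<in>A. cnj (u p) * M p q) * (\<Sum>r\<in>B. N q r * v r)) UNIV"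
proof -
  have sm: "(\<lambda>q. cnj (u p) * (M p q * N q r) * v r) summable_on UNIV" for p r
    using mmul_summable[OF M N, of p r] by (intro summable_on_cmult_left summable_on_cmult_right)
  have "fv2 (mmul M N) A B u v = (\<Sum>p\<in>A. \<Sum>r\<in>B. infsum (\<lambda>q. cnj (u p) * (M p q * N q r) * v r) UNIV)"
    unfolding fv2_def mmul_def using mmul_summable[OF M N] by (simp add: infsum_cmult_both)
  also have "\<dots> = (\<Sum>p\<in>A. infsum (\<lambda>q. \<Sum>r\<in>B. cnj (u p) * (M p q * N q r) * v r) UNIV)"
    using B sm by (simp add: infsum_sum')
  also have "\<dots> = infsum (\<lambda>q. \<Sum>p\<in>A. \<Sum>r\<in>B. cnj (u p) * (M p q * N q r) * v r) UNIV"
    using A B sm by (intro infsum_sum'[symmetric] summable_on_sum') auto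
  also have "\<dots> = infsum (\<lambda>q. (\<Sum>p\<in>A. cnj (u p) * M p q) * (\<Sum>r\<in>B. N q r * v r)) UNIV"
    unfolding sum_product by (simp add: mult_ac)
  finally show ?thesis .
qed

lemma mmul_bounded:
  fixes M N :: "'i \<Rightarrow> 'i \<Rightarrow> complex"
  assumes M: "bounded_op M" and N: "bounded_op N"
  shows "bounded_op (mmul M N) \<and> opnorm (mmul M N) \<le> opnorm M * opnorm N"
proof (rule opnorm_leI)
  show "0 \<le> opnorm M * opnorm N" using opnorm_nonneg[OF M] opnorm_nonneg[OF N] by simp
  fix A B :: "'i set" and u v :: "'i \<Rightarrow> complex" assume A: "finite A" and B: "finite B"
  have "cmod (infsum (\<lambda>q. (\<Sum>p\<in>A. cnj (u p) * M p q) * (\<Sum>r\<in>B. N q r * v r)) UNIV)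
      \<le> (opnorm M * nF A u) * (opnorm N * nF B v)"
    using mult_nonneg_nonneg[OF opnorm_nonneg[OF M] nF_nonneg] mult_nonneg_nonneg[OF opnorm_nonneg[OF N] nF_nonneg] row_sq[OF M A] col_sq[OF N B]
    by (intro conjunct2[OF CS_bound]) auto
  then show "cmod (fv2 (mmul M N) A B u v) \<le> opnorm M * opnorm N * nF A u * nF B v"
    unfolding fv2_mmul[OF M N A B] by (simp add: mult_ac)
qed

lemma mmul_diff_left:
  assumes "bounded_op M" "bounded_op M'" "bounded_op N"
  shows "mmul (\<lambda>p q. M p q - M' p q) N = (\<lambda>p r. mmul M N p r - mmul M' N p r)"
  unfolding mmul_def
  using mmul_summable[OF assms(1,3)] mmul_summable[OF assms(2,3)]
  by (simp add: left_diff_distrib infsum_diff')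

lemma mmul_diff_right:
  assumes "bounded_op M" "bounded_op N" "bounded_op N'"
  shows "mmul M (\<lambda>p q. N p q - N' p q) = (\<lambda>p r. mmul M N p r - mmul M N' p r)"
  unfolding mmul_def
  using mmul_summable[OF assms(1,2)] mmul_summable[OF assms(1,3)]
  by (simp add: right_diff_distrib infsum_diff')

lemma mmul_approx:
  fixes M M' N N' :: "'i \<Rightarrow> 'i \<Rightarrow> complex"
  assumes M: "bounded_op M" and M': "bounded_op M'" and N: "bounded_op N" and N': "bounded_op N'"
  shows "bounded_op (\<lambda>p r. mmul M N p r - mmul M' N' p r) \<and>
    opnorm (\<lambda>p r. mmul M N p r - mmul M' N' p r)
      \<le> opnorm (\<lambda>p q. M p q - M' p q) * opnorm N + opnorm M' * opnorm (\<lambda>p q. N p q - N' p q)"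
proof -
  have dM: "bounded_op (\<lambda>p q. M p q - M' p q)" using opnorm_diff[OF M M'] by simp
  have dN: "bounded_op (\<lambda>p q. N p q - N' p q)" using opnorm_diff[OF N N'] by simp
  have e: "(\<lambda>p r. mmul M N p r - mmul M' N' p r) =
     (\<lambda>p r. mmul (\<lambda>p q. M p q - M' p q) N p r + mmul M' (\<lambda>p q. N p q - N' p q) p r)"
    unfolding mmul_diff_left[OF M M' N] mmul_diff_right[OF M' N N'] by simp
  have b1: "bounded_op (mmul (\<lambda>p q. M p q - M' p q) N) \<and> opnorm (mmul (\<lambda>p q. M p q - M' p q) N) \<le> opnorm (\<lambda>p q. M p q - M' p q) * opnorm N"
    by (rule mmul_bounded[OF dM N])
  have b2: "bounded_op (mmul M' (\<lambda>p q. N p q - N' p q)) \<and> opnorm (mmul M' (\<lambda>p q. N p q - N' p q)) \<le> opnorm M' * opnorm (\<lambda>p q. N p q - N' p q)"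
    by (rule mmul_bounded[OF M' dN])
  show ?thesis unfolding e using opnorm_add[of "mmul (\<lambda>p q. M p q - M' p q) N" "mmul M' (\<lambda>p q. N p q - N' p q)"] b1 b2
    by auto
qed

definition l2n :: "('i \<Rightarrow> complex) \<Rightarrow> real" where
  "l2n u = sqrt (infsum (\<lambda>i. (cmod (u i))\<^sup>2) UNIV)"

lemma l2_fin:
  assumes "l2vec u" "finite A"
  shows "(\<Sum>i\<in>A. (cmod (u i))\<^sup>2) \<le> (l2n u)\<^sup>2"
proof -
  have "(\<Sum>i\<in>A. (cmod (u i))\<^sup>2) \<le> infsum (\<lambda>i. (cmod (u i))\<^sup>2) UNIV"
    using assms unfolding l2vec_def by (intro finite_sum_le_infsum) auto
  moreover have "infsum (\<lambda>i. (cmod (u i))\<^sup>2) UNIV \<ge> 0" by (intro infsum_nonneg) auto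
  ultimately show ?thesis unfolding l2n_def by simp
qed

lemma l2n_nonneg: "0 \<le> l2n u"
  unfolding l2n_def by (simp add: infsum_nonneg)

lemma l2vecI:
  assumes "\<And>G. finite G \<Longrightarrow> (\<Sum>i\<in>G. (cmod (u i))\<^sup>2) \<le> C"
  shows "l2vec u"
  unfolding l2vec_def
  by (rule nonneg_bdd_above_summable_on) (auto intro!: bdd_aboveI[where M=C] assms)

lemma l2vec_cnj: "l2vec u \<Longrightarrow> l2vec (\<lambda>i. cnj (u i))"
  unfolding l2vec_def by simp

lemma dot_fin:
  fixes a u :: "'i \<Rightarrow> complex"
  shows "cmod (\<Sum>i\<in>A. cnj (a i) * u i) \<le> nF A a * sqrt (\<Sum>i\<in>A. (cmod (u i))\<^sup>2)"
proof -
  have "cmod (\<Sum>i\<in>A. cnj (a i) * u i) \<le> (\<Sum>i\<in>A. cmod (cnj (a i) * u i))" by (rule norm_sum)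
  also have "\<dots> \<le> sqrt (\<Sum>i\<in>A. (cmod (cnj (a i)))\<^sup>2) * sqrt (\<Sum>i\<in>A. (cmod (u i))\<^sup>2)"
    by (rule finite_CS)
  finally show ?thesis unfolding nF_def by simp
qed

lemma rank_one_bounded:
  fixes u v :: "'i \<Rightarrow> complex"
  assumes u: "l2vec u" and v: "l2vec v"
  shows "bounded_op (\<lambda>i j. u i * cnj (v j))"
proof -
  have "bounded_op (\<lambda>i j. u i * cnj (v j)) \<and> opnorm (\<lambda>i j. u i * cnj (v j)) \<le> l2n u * l2n v"
  proof (rule opnorm_leI)
    show "0 \<le> l2n u * l2n v" by (intro mult_nonneg_nonneg l2n_nonneg)
    fix A B :: "'i set" and a b :: "'i \<Rightarrow> complex" assume A: "finite A" and B: "finite B"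
    have e: "fv2 (\<lambda>i j. u i * cnj (v j)) A B a b = (\<Sum>i\<in>A. cnj (a i) * u i) * cnj (\<Sum>j\<in>B. cnj (b j) * v j)"
      unfolding fv2_def cnj_sum sum_product by (simp add: mult_ac)
    have 1: "cmod (\<Sum>i\<in>A. cnj (a i) * u i) \<le> nF A a * l2n u"
    proof -
      have "sqrt (\<Sum>i\<in>A. (cmod (u i))\<^sup>2) \<le> sqrt ((l2n u)\<^sup>2)"
        using l2_fin[OF u A] by (rule real_sqrt_le_mono)
      also have "\<dots> = l2n u" using l2n_nonneg[of u] by simp
      finally have "nF A a * sqrt (\<Sum>i\<in>A. (cmod (u i))\<^sup>2) \<le> nF A a * l2n u"
        using nF_nonneg[of A a] by (rule mult_left_mono)
      then show ?thesis using dot_fin[of a u A] by linarith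
    qed
    have 2: "cmod (\<Sum>j\<in>B. cnj (b j) * v j) \<le> nF B b * l2n v"
    proof -
      have "sqrt (\<Sum>i\<in>B. (cmod (v i))\<^sup>2) \<le> sqrt ((l2n v)\<^sup>2)"
        using l2_fin[OF v B] by (rule real_sqrt_le_mono)
      also have "\<dots> = l2n v" using l2n_nonneg[of v] by simp
      finally have "nF B b * sqrt (\<Sum>i\<in>B. (cmod (v i))\<^sup>2) \<le> nF B b * l2n v"
        using nF_nonneg[of B b] by (rule mult_left_mono)
      then show ?thesis using dot_fin[of b v B] by linarith
    qed
    have "cmod (fv2 (\<lambda>i j. u i * cnj (v j)) A B a b) \<le> (nF A a * l2n u) * (nF B b * l2n v)"
      unfolding e norm_mult complex_mod_cnj using 1 2
      by (intro mult_mono) (auto simp: nF_nonneg l2n_nonneg)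
    then show "cmod (fv2 (\<lambda>i j. u i * cnj (v j)) A B a b) \<le> l2n u * l2n v * nF A a * nF B b"
      by (simp add: mult_ac)
  qed
  then show ?thesis by simp
qed

lemma bounded_sum:
  fixes R :: "'k \<Rightarrow> 'i \<Rightarrow> 'i \<Rightarrow> complex"
  assumes "finite K" "\<And>k. k \<in> K \<Longrightarrow> bounded_op (R k)"
  shows "bounded_op (\<lambda>i j. \<Sum>k\<in>K. R k i j) \<and> opnorm (\<lambda>i j. \<Sum>k\<in>K. R k i j) \<le> (\<Sum>k\<in>K. opnorm (R k))"
  using assms
proof (induction K rule: finite_induct)
  case empty
  then show ?case using opnorm_zero[where 'i='i] by simp
next
  case (insert k K)
  have b: "bounded_op (R k)" using insert by simp
  have ih: "bounded_op (\<lambda>i j. \<Sum>k\<in>K. R k i j) \<and> opnorm (\<lambda>i j. \<Sum>k\<in>K. R k i j) \<le> (\<Sum>k\<in>K. opnorm (R k))"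
    using insert by simp
  have "bounded_op (\<lambda>i j. R k i j + (\<Sum>k\<in>K. R k i j)) \<and>
     opnorm (\<lambda>i j. R k i j + (\<Sum>k\<in>K. R k i j)) \<le> opnorm (R k) + opnorm (\<lambda>i j. \<Sum>k\<in>K. R k i j)"
    using opnorm_add[OF b conjunct1[OF ih]] by simp
  then show ?case using insert.hyps ih by simp
qed

lemma finite_rankI:
  fixes n :: nat
  assumes "\<forall>k<n. l2vec (u k) \<and> l2vec (v k)" "K = (\<lambda>i j. \<Sum>k<n. u k i * cnj (v k j))"
  shows "finite_rank K"
  unfolding finite_rank_def using assms by blast

lemma finite_rank_bounded:
  assumes "finite_rank F" shows "bounded_op F"
proof -
  obtain n :: nat and u v where uv: "\<forall>k<n. l2vec (u k) \<and> l2vec (v k)"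
    and F: "F = (\<lambda>i j. \<Sum>k<n. u k i * cnj (v k j))"
    using assms unfolding finite_rank_def by blast
  show ?thesis unfolding F
    using bounded_sum[of "{..<n}" "\<lambda>k i j. u k i * cnj (v k j)"] rank_one_bounded uv by auto
qed

lemma vec_l2:
  fixes B :: "'i \<Rightarrow> 'i \<Rightarrow> complex"
  assumes B: "bounded_op B" and v: "l2vec v"
  shows "l2vec (\<lambda>i. infsum (\<lambda>q. B i q * v q) UNIV)"
proof (rule l2vecI)
  define w where "w i = infsum (\<lambda>q. B i q * v q) UNIV" for i
  have sm: "(\<lambda>q. B i q * v q) summable_on UNIV" for i
    using CS_bound[of "opnorm B" "l2n v" "\<lambda>q. B i q" v] opnorm_nonneg[OF B] l2n_nonneg
      row_entries[OF B] l2_fin[OF v] by blast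
  fix G :: "'i set" assume G: "finite G"
  define s where "s = (\<Sum>i\<in>G. (cmod (w i))\<^sup>2)"
  have s0: "0 \<le> s" unfolding s_def by (simp add: sum_nonneg)
  have "of_real s = (\<Sum>i\<in>G. cnj (w i) * w i)"
    unfolding s_def of_real_sum by (rule sum.cong[OF refl]) (subst mult.commute, rule complex_norm_square)
  also have "\<dots> = (\<Sum>i\<in>G. infsum (\<lambda>q. cnj (w i) * (B i q * v q)) UNIV)"
    unfolding w_def using sm by (simp add: infsum_cmult_right)
  also have "\<dots> = infsum (\<lambda>q. \<Sum>i\<in>G. cnj (w i) * (B i q * v q)) UNIV"
    using G sm by (intro infsum_sum'[symmetric] summable_on_cmult_right) auto
  also have "\<dots> = infsum (\<lambda>q. (\<Sum>i\<in>G. cnj (w i) * B i q) * v q) UNIV"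
    unfolding sum_distrib_right by (simp add: mult_ac)
  finally have e: "of_real s = infsum (\<lambda>q. (\<Sum>i\<in>G. cnj (w i) * B i q) * v q) UNIV" .
  have "cmod (infsum (\<lambda>q. (\<Sum>i\<in>G. cnj (w i) * B i q) * v q) UNIV) \<le> (opnorm B * nF G w) * l2n v"
    using mult_nonneg_nonneg[OF opnorm_nonneg[OF B] nF_nonneg] l2n_nonneg row_sq[OF B G] l2_fin[OF v]
    by (intro conjunct2[OF CS_bound]) auto
  moreover have "nF G w = sqrt s" unfolding nF_def s_def ..
  ultimately have "cmod (of_real s) \<le> (opnorm B * sqrt s) * l2n v" unfolding e by simp
  then have "s \<le> (opnorm B * l2n v) * sqrt s"
    using s0 by (simp add: mult_ac)
  then have "s \<le> (opnorm B * l2n v)\<^sup>2"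
    using s0 mult_nonneg_nonneg[OF opnorm_nonneg[OF B] l2n_nonneg] by (intro sq_le_aux) auto
  then show "(\<Sum>i\<in>G. (cmod (infsum (\<lambda>q. B i q * v q) UNIV))\<^sup>2) \<le> (opnorm B * l2n v)\<^sup>2"
    unfolding s_def w_def .
qed

definition adj :: "('i \<Rightarrow> 'i \<Rightarrow> complex) \<Rightarrow> ('i \<Rightarrow> 'i \<Rightarrow> complex)" where
  "adj B = (\<lambda>p q. cnj (B q p))"

lemma adj_bounded:
  fixes B :: "'i \<Rightarrow> 'i \<Rightarrow> complex"
  assumes B: "bounded_op B" shows "bounded_op (adj B)"
proof -
  have "bounded_op (adj B) \<and> opnorm (adj B) \<le> opnorm B"
  proof (rule opnorm_leI)
    show "0 \<le> opnorm B" using opnorm_nonneg[OF B] .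
    fix A C :: "'i set" and a b :: "'i \<Rightarrow> complex" assume A: "finite A" and C: "finite C"
    have "fv2 (adj B) A C a b = cnj (fv2 B C A b a)"
      unfolding fv2_def adj_def by (simp add: sum.swap[of _ A C] mult_ac)
    then have "cmod (fv2 (adj B) A C a b) = cmod (fv2 B C A b a)" by simp
    also have "\<dots> \<le> opnorm B * nF C b * nF A a" by (rule fv2_bound[OF B C A])
    finally show "cmod (fv2 (adj B) A C a b) \<le> opnorm B * nF A a * nF C b" by (simp add: mult_ac)
  qed
  then show ?thesis by simp
qed

lemma sum_split_nat:
  fixes n1 n2 :: nat shows "(\<Sum>k<n1+n2. g k) = (\<Sum>k<n1. g k) + (\<Sum>k<n2. g (k + n1))"
proof -
  have "(\<Sum>k<n1+n2. g k) = sum g {0..<n1} + sum g {n1..<n1+n2}"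
    by (simp add: atLeast0LessThan[symmetric] sum.atLeastLessThan_concat)
  also have "sum g {n1..<n1+n2} = sum (\<lambda>k. g (k + n1)) {0..<n2}"
    using sum.shift_bounds_nat_ivl[of g 0 n1 n2] by (simp add: add.commute)
  finally show ?thesis by (simp add: atLeast0LessThan)
qed

lemma fr_add:
  assumes "finite_rank F1" "finite_rank F2"
  shows "finite_rank (\<lambda>i j. F1 i j + F2 i j)"
proof -
  obtain n1 :: nat and u1 v1 where uv1: "\<forall>k<n1. l2vec (u1 k) \<and> l2vec (v1 k)"
    and F1: "F1 = (\<lambda>i j. \<Sum>k<n1. u1 k i * cnj (v1 k j))"
    using assms(1) unfolding finite_rank_def by blast
  obtain n2 :: nat and u2 v2 where uv2: "\<forall>k<n2. l2vec (u2 k) \<and> l2vec (v2 k)"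
    and F2: "F2 = (\<lambda>i j. \<Sum>k<n2. u2 k i * cnj (v2 k j))"
    using assms(2) unfolding finite_rank_def by blast
  define u where "u k = (if k < n1 then u1 k else u2 (k - n1))" for k
  define v where "v k = (if k < n1 then v1 k else v2 (k - n1))" for k
  have "\<forall>k<n1+n2. l2vec (u k) \<and> l2vec (v k)" using uv1 uv2 unfolding u_def v_def by auto
  moreover have "(\<lambda>i j. F1 i j + F2 i j) = (\<lambda>i j. \<Sum>k<n1+n2. u k i * cnj (v k j))"
    unfolding sum_split_nat F1 F2 u_def v_def by simp
  ultimately show ?thesis by (intro finite_rankI)
qed

lemma fr_scale:
  assumes "finite_rank F"
  shows "finite_rank (\<lambda>i j. c * F i j)"
proof -
  obtain n :: nat and u v where uv: "\<forall>k<n. l2vec (u k) \<and> l2vec (v k)"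
    and F: "F = (\<lambda>i j. \<Sum>k<n. u k i * cnj (v k j))"
    using assms unfolding finite_rank_def by blast
  have "\<forall>k<n. l2vec (\<lambda>i. c * u k i) \<and> l2vec (v k)"
  proof (intro allI impI conjI)
    fix k assume k: "k < n"
    show "l2vec (v k)" using uv k by simp
    have "(\<lambda>i. (cmod (u k i))\<^sup>2) summable_on UNIV" using uv k unfolding l2vec_def by simp
    then show "l2vec (\<lambda>i. c * u k i)"
      unfolding l2vec_def norm_mult power_mult_distrib by (rule summable_on_cmult_right)
  qed
  moreover have "(\<lambda>i j. c * F i j) = (\<lambda>i j. \<Sum>k<n. (\<lambda>i. c * u k i) i * cnj (v k j))"
    unfolding F by (simp add: sum_distrib_left mult_ac)
  ultimately show ?thesis by (intro finite_rankI)
qed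

lemma fr_mmul_right:
  fixes F B :: "nat \<Rightarrow> nat \<Rightarrow> complex"
  assumes F: "finite_rank F" and B: "bounded_op B"
  shows "finite_rank (mmul F B)"
proof -
  obtain n :: nat and u v where uv: "\<forall>k<n. l2vec (u k) \<and> l2vec (v k)"
    and Fe: "F = (\<lambda>i j. \<Sum>k<n. u k i * cnj (v k j))"
    using F unfolding finite_rank_def by blast
  define w where "w k j = infsum (\<lambda>q. adj B j q * v k q) UNIV" for k j
  have sm: "(\<lambda>q. cnj (v k q) * B q j) summable_on UNIV" if "k < n" for k j
    using CS_bound[of "l2n (\<lambda>q. cnj (v k q))" "opnorm B" "\<lambda>q. cnj (v k q)" "\<lambda>q. B q j"]
      opnorm_nonneg[OF B] l2n_nonneg l2_fin[OF l2vec_cnj] uv that col_entries[OF B] by blast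
  have "mmul F B = (\<lambda>i j. \<Sum>k<n. u k i * cnj (w k j))"
  proof (intro ext)
    fix i j
    have "mmul F B i j = infsum (\<lambda>q. \<Sum>k<n. u k i * (cnj (v k q) * B q j)) UNIV"
      unfolding mmul_def Fe sum_distrib_right by (simp add: mult_ac)
    also have "\<dots> = (\<Sum>k<n. infsum (\<lambda>q. u k i * (cnj (v k q) * B q j)) UNIV)"
      using sm by (intro infsum_sum' summable_on_cmult_right) auto
    also have "\<dots> = (\<Sum>k<n. u k i * cnj (w k j))"
    proof (rule sum.cong[OF refl])
      fix k assume k: "k \<in> {..<n}"
      have "cnj (w k j) = infsum (\<lambda>q. cnj (v k q) * B q j) UNIV"
        unfolding w_def adj_def infsum_cnj[symmetric] by (simp add: mult.commute)
      then show "infsum (\<lambda>q. u k i * (cnj (v k q) * B q j)) UNIV = u k i * cnj (w k j)"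
        using sm k by (simp add: infsum_cmult_right)
    qed
    finally show "mmul F B i j = (\<Sum>k<n. u k i * cnj (w k j))" .
  qed
  moreover have "\<forall>k<n. l2vec (u k) \<and> l2vec (w k)"
  proof (intro allI impI conjI)
    fix k assume k: "k < n"
    show "l2vec (u k)" using uv k by simp
    show "l2vec (w k)" unfolding w_def by (rule vec_l2[OF adj_bounded[OF B]]) (use uv k in simp)
  qed
  ultimately show ?thesis by (intro finite_rankI)
qed

lemma fr_mmul_left:
  fixes F B :: "nat \<Rightarrow> nat \<Rightarrow> complex"
  assumes F: "finite_rank F" and B: "bounded_op B"
  shows "finite_rank (mmul B F)"
proof -
  obtain n :: nat and u v where uv: "\<forall>k<n. l2vec (u k) \<and> l2vec (v k)"
    and Fe: "F = (\<lambda>i j. \<Sum>k<n. u k i * cnj (v k j))"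
    using F unfolding finite_rank_def by blast
  define w where "w k i = infsum (\<lambda>q. B i q * u k q) UNIV" for k i
  have sm: "(\<lambda>q. B i q * u k q) summable_on UNIV" if "k < n" for k i
    using CS_bound[of "opnorm B" "l2n (u k)" "\<lambda>q. B i q" "u k"]
      opnorm_nonneg[OF B] l2n_nonneg l2_fin uv that row_entries[OF B] by blast
  have "mmul B F = (\<lambda>i j. \<Sum>k<n. w k i * cnj (v k j))"
  proof (intro ext)
    fix i j
    have "mmul B F i j = infsum (\<lambda>q. \<Sum>k<n. (B i q * u k q) * cnj (v k j)) UNIV"
      unfolding mmul_def Fe sum_distrib_left by (simp add: mult_ac)
    also have "\<dots> = (\<Sum>k<n. infsum (\<lambda>q. (B i q * u k q) * cnj (v k j)) UNIV)"
      using sm by (intro infsum_sum' summable_on_cmult_left) auto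
    also have "\<dots> = (\<Sum>k<n. w k i * cnj (v k j))"
      unfolding w_def using sm by (intro sum.cong[OF refl]) (simp add: infsum_cmult_left)
    finally show "mmul B F i j = (\<Sum>k<n. w k i * cnj (v k j))" .
  qed
  moreover have "\<forall>k<n. l2vec (w k) \<and> l2vec (v k)"
  proof (intro allI impI conjI)
    fix k assume k: "k < n"
    show "l2vec (v k)" using uv k by simp
    show "l2vec (w k)" unfolding w_def by (rule vec_l2[OF B]) (use uv k in simp)
  qed
  ultimately show ?thesis by (intro finite_rankI)
qed

lemma compact_opI:
  assumes "bounded_op K" "\<And>e. e > 0 \<Longrightarrow> \<exists>F. finite_rank F \<and> opnorm (\<lambda>i j. K i j - F i j) < e"
  shows "compact_op K"
  using assms unfolding compact_op_def by blast

lemma compact_opD: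
  assumes "compact_op K" "e > 0"
  obtains F where "finite_rank F" "opnorm (\<lambda>i j. K i j - F i j) < e"
  using assms unfolding compact_op_def by blast

lemma compact_bounded: "compact_op K \<Longrightarrow> bounded_op K"
  unfolding compact_op_def by simp

lemma diff_self_zero: "(\<lambda>p q. B p q - B p q) = (\<lambda>p q. 0::complex)"
  by simp

lemma compact_zero: "compact_op (\<lambda>i j. 0)"
proof (rule compact_opI)
  show "bounded_op (\<lambda>i j. 0::complex)" using opnorm_zero by blast
  fix e :: real assume e: "e > 0"
  have "finite_rank (\<lambda>i j. 0::complex)"
    by (rule finite_rankI[of 0 "\<lambda>_ _. 0" "\<lambda>_ _. 0"]) auto
  moreover have "opnorm (\<lambda>i j::nat. (0::complex) - 0) < e" using opnorm_zero[where 'i=nat] e by simp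
  ultimately show "\<exists>F. finite_rank F \<and> opnorm (\<lambda>i j. 0 - F i j) < e" by blast
qed

lemma compact_add:
  assumes K1: "compact_op K1" and K2: "compact_op K2"
  shows "compact_op (\<lambda>i j. K1 i j + K2 i j)"
proof (rule compact_opI)
  show "bounded_op (\<lambda>i j. K1 i j + K2 i j)"
    using opnorm_add[OF compact_bounded[OF K1] compact_bounded[OF K2]] by simp
  fix e :: real assume e: "e > 0"
  obtain F1 where F1: "finite_rank F1" "opnorm (\<lambda>i j. K1 i j - F1 i j) < e/2"
    using compact_opD[OF K1, of "e/2"] e by auto
  obtain F2 where F2: "finite_rank F2" "opnorm (\<lambda>i j. K2 i j - F2 i j) < e/2"
    using compact_opD[OF K2, of "e/2"] e by auto
  have D1: "bounded_op (\<lambda>i j. K1 i j - F1 i j)"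
    using opnorm_diff[OF compact_bounded[OF K1] finite_rank_bounded[OF F1(1)]] by simp
  have D2: "bounded_op (\<lambda>i j. K2 i j - F2 i j)"
    using opnorm_diff[OF compact_bounded[OF K2] finite_rank_bounded[OF F2(1)]] by simp
  have eq: "(\<lambda>i j. (K1 i j + K2 i j) - (F1 i j + F2 i j)) = (\<lambda>i j. (K1 i j - F1 i j) + (K2 i j - F2 i j))"
    by (simp add: algebra_simps)
  have "opnorm (\<lambda>i j. (K1 i j + K2 i j) - (F1 i j + F2 i j)) \<le> opnorm (\<lambda>i j. K1 i j - F1 i j) + opnorm (\<lambda>i j. K2 i j - F2 i j)"
    unfolding eq using opnorm_add[OF D1 D2] by simp
  then have "opnorm (\<lambda>i j. (K1 i j + K2 i j) - (F1 i j + F2 i j)) < e" using F1(2) F2(2) by simp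
  moreover have "finite_rank (\<lambda>i j. F1 i j + F2 i j)" using fr_add[OF F1(1) F2(1)] .
  ultimately show "\<exists>F. finite_rank F \<and> opnorm (\<lambda>i j. K1 i j + K2 i j - F i j) < e" by blast
qed

lemma compact_scale:
  assumes K: "compact_op K"
  shows "compact_op (\<lambda>i j. c * K i j)"
proof (rule compact_opI)
  show "bounded_op (\<lambda>i j. c * K i j)"
    using opnorm_scale[OF compact_bounded[OF K]] by simp
  fix e :: real assume e: "e > 0"
  have ep: "e / (cmod c + 1) > 0" using e norm_ge_zero[of c] by (intro divide_pos_pos) linarith+
  obtain F where F: "finite_rank F" "opnorm (\<lambda>i j. K i j - F i j) < e / (cmod c + 1)"
    using compact_opD[OF K ep] by blast
  have D: "bounded_op (\<lambda>i j. K i j - F i j)"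
    using opnorm_diff[OF compact_bounded[OF K] finite_rank_bounded[OF F(1)]] by simp
  have eq: "(\<lambda>i j. c * K i j - c * F i j) = (\<lambda>i j. c * (K i j - F i j))"
    by (simp add: algebra_simps)
  have "opnorm (\<lambda>i j. c * K i j - c * F i j) \<le> cmod c * opnorm (\<lambda>i j. K i j - F i j)"
    unfolding eq using opnorm_scale[OF D] by simp
  also have "\<dots> \<le> (cmod c + 1) * opnorm (\<lambda>i j. K i j - F i j)"
    using opnorm_nonneg[OF D] by (intro mult_right_mono) auto
  also have "\<dots> < (cmod c + 1) * (e / (cmod c + 1))"
    using F(2) by (intro mult_strict_left_mono) (auto intro: add_nonneg_pos)
  also have "\<dots> = e" proof - have "cmod c + 1 \<noteq> 0" using norm_ge_zero[of c] by linarith then show ?thesis by simp qed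
  finally have "opnorm (\<lambda>i j. c * K i j - c * F i j) < e" .
  moreover have "finite_rank (\<lambda>i j. c * F i j)" using fr_scale[OF F(1)] .
  ultimately show "\<exists>F. finite_rank F \<and> opnorm (\<lambda>i j. c * K i j - F i j) < e" by blast
qed

lemma compact_mmul_right:
  assumes K: "compact_op K" and B: "bounded_op B"
  shows "compact_op (mmul K B)"
proof (rule compact_opI)
  show "bounded_op (mmul K B)" using mmul_bounded[OF compact_bounded[OF K] B] by simp
  fix e :: real assume e: "e > 0"
  obtain F where F: "finite_rank F" "opnorm (\<lambda>i j. K i j - F i j) < e / (opnorm B + 1)"
  proof -
    have ep: "e / (opnorm B + 1) > 0" using e opnorm_nonneg[OF B] by (intro divide_pos_pos) linarith+
    show ?thesis using compact_opD[OF K ep] that by blast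
  qed
  have Fb: "bounded_op F" using finite_rank_bounded[OF F(1)] .
  have D: "bounded_op (\<lambda>i j. K i j - F i j)"
    using opnorm_diff[OF compact_bounded[OF K] Fb] by simp
  have "opnorm (\<lambda>i j. mmul K B i j - mmul F B i j) \<le>
      opnorm (\<lambda>i j. K i j - F i j) * opnorm B + opnorm F * opnorm (\<lambda>p q. B p q - B p q)"
    using mmul_approx[OF compact_bounded[OF K] Fb B B] by simp
  also have "\<dots> = opnorm (\<lambda>i j. K i j - F i j) * opnorm B"
    unfolding diff_self_zero using opnorm_zero[where 'i=nat] by simp
  also have "\<dots> \<le> opnorm (\<lambda>i j. K i j - F i j) * (opnorm B + 1)"
    using opnorm_nonneg[OF D] by (intro mult_left_mono) auto
  also have "\<dots> < (e / (opnorm B + 1)) * (opnorm B + 1)"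
    using F(2) opnorm_nonneg[OF B] by (intro mult_strict_right_mono) auto
  also have "\<dots> = e" using opnorm_nonneg[OF B] by simp
  finally have "opnorm (\<lambda>i j. mmul K B i j - mmul F B i j) < e" .
  moreover have "finite_rank (mmul F B)" using fr_mmul_right[OF F(1) B] .
  ultimately show "\<exists>G. finite_rank G \<and> opnorm (\<lambda>i j. mmul K B i j - G i j) < e" by blast
qed

lemma compact_mmul_left:
  assumes K: "compact_op K" and B: "bounded_op B"
  shows "compact_op (mmul B K)"
proof (rule compact_opI)
  show "bounded_op (mmul B K)" using mmul_bounded[OF B compact_bounded[OF K]] by simp
  fix e :: real assume e: "e > 0"
  obtain F where F: "finite_rank F" "opnorm (\<lambda>i j. K i j - F i j) < e / (opnorm B + 1)"
  proof -
    have ep: "e / (opnorm B + 1) > 0" using e opnorm_nonneg[OF B] by (intro divide_pos_pos) linarith+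
    show ?thesis using compact_opD[OF K ep] that by blast
  qed
  have Fb: "bounded_op F" using finite_rank_bounded[OF F(1)] .
  have D: "bounded_op (\<lambda>i j. K i j - F i j)"
    using opnorm_diff[OF compact_bounded[OF K] Fb] by simp
  have "opnorm (\<lambda>i j. mmul B K i j - mmul B F i j) \<le>
      opnorm (\<lambda>p q. B p q - B p q) * opnorm K + opnorm B * opnorm (\<lambda>i j. K i j - F i j)"
    using mmul_approx[OF B B compact_bounded[OF K] Fb] by simp
  also have "\<dots> = opnorm B * opnorm (\<lambda>i j. K i j - F i j)"
    unfolding diff_self_zero using opnorm_zero[where 'i=nat] by simp
  also have "\<dots> \<le> (opnorm B + 1) * opnorm (\<lambda>i j. K i j - F i j)"
    using opnorm_nonneg[OF D] by (intro mult_right_mono) auto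
  also have "\<dots> < (opnorm B + 1) * (e / (opnorm B + 1))"
    using F(2) opnorm_nonneg[OF B] by (intro mult_strict_left_mono) auto
  also have "\<dots> = e" using opnorm_nonneg[OF B] by simp
  finally have "opnorm (\<lambda>i j. mmul B K i j - mmul B F i j) < e" .
  moreover have "finite_rank (mmul B F)" using fr_mmul_left[OF F(1) B] .
  ultimately show "\<exists>G. finite_rank G \<and> opnorm (\<lambda>i j. mmul B K i j - G i j) < e" by blast
qed

lemma compact_sum:
  assumes "finite S" "\<And>y. y \<in> S \<Longrightarrow> compact_op (f y)"
  shows "compact_op (\<lambda>i j. \<Sum>y\<in>S. f y i j)"
  using assms
proof (induction S rule: finite_induct)
  case empty then show ?case using compact_zero by simp
next
  case (insert y S)
  have "compact_op (\<lambda>i j. f y i j + (\<Sum>y\<in>S. f y i j))"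
    using insert by (intro compact_add) auto
  then show ?case using insert.hyps by simp
qed

lemma entry_mmul:
  fixes a b :: "'a \<times> nat \<Rightarrow> 'a \<times> nat \<Rightarrow> complex"
  assumes a: "bounded_op a" and b: "bounded_op b" and S: "finite S"
    and z: "\<And>i j y k. y \<notin> S \<Longrightarrow> a (x, i) (y, k) * b (y, k) (z, j) = 0"
  shows "entry (mmul a b) x z = (\<lambda>i j. \<Sum>y\<in>S. mmul (entry a x y) (entry b y z) i j)"
proof (intro ext)
  fix i j
  define f where "f q = a (x, i) q * b q (z, j)" for q
  have sm: "f summable_on UNIV" unfolding f_def by (rule mmul_summable[OF a b])
  have "entry (mmul a b) x z i j = infsum f UNIV" unfolding entry_def mmul_def f_def ..
  also have "\<dots> = infsum f (\<Union>y\<in>S. Pair y ` UNIV)"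
  proof (rule infsum_cong_neutral)
    fix q :: "'a \<times> nat" assume q: "q \<in> UNIV - (\<Union>y\<in>S. Pair y ` UNIV)"
    obtain y k where qq: "q = (y, k)" by (cases q)
    have "y \<notin> S" using q qq by auto
    then show "f q = 0" unfolding f_def qq by (rule z)
  qed auto
  also have "\<dots> = (\<Sum>y\<in>S. infsum f (Pair y ` UNIV))"
    using S by (intro sum_infsum[symmetric] summable_on_subset_banach[OF sm]) auto
  also have "\<dots> = (\<Sum>y\<in>S. mmul (entry a x y) (entry b y z) i j)"
  proof (rule sum.cong[OF refl])
    fix y assume "y \<in> S"
    have "infsum f (Pair y ` UNIV) = infsum (f \<circ> Pair y) UNIV"
      by (rule infsum_reindex) (auto simp: inj_on_def)
    then show "infsum f (Pair y ` UNIV) = mmul (entry a x y) (entry b y z) i j"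
      unfolding mmul_def entry_def f_def by (simp add: o_def)
  qed
  finally show "entry (mmul a b) x z i j = (\<lambda>i j. \<Sum>y\<in>S. mmul (entry a x y) (entry b y z) i j) i j"
    by simp
qed

lemma entry_zeroD: "entry T x y = (\<lambda>i j. 0) \<Longrightarrow> T (x, i) (y, j) = 0"
  unfolding entry_def by (drule fun_cong[where x=i], drule fun_cong[where x=j]) simp

lemma mmul_zero_if:
  assumes "\<And>q. a p q * b q r = 0"
  shows "mmul a b p r = 0"
proof -
  have "(\<lambda>q. a p q * b q r) = (\<lambda>q. 0)" by (rule ext) (rule assms)
  then show ?thesis unfolding mmul_def by simp
qed

lemma alg_roeD:
  assumes "T \<in> alg_roe Z"
  shows "bounded_op T" "supported_in Z T" "\<exists>R. \<forall>x y. dist x y > R \<longrightarrow> entry T x y = (\<lambda>i j. 0)"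
    "\<And>x y. compact_op (entry T x y)"
  using assms unfolding alg_roe_def by auto

lemma alg_roe_prop_nonneg:
  fixes T :: "'a::metric_space \<times> nat \<Rightarrow> 'a \<times> nat \<Rightarrow> complex"
  assumes "T \<in> alg_roe Z"
  obtains R where "R \<ge> 0" "\<And>x y i j. dist x y > R \<Longrightarrow> T (x, i) (y, j) = 0"
proof -
  obtain R where R: "\<forall>x y. dist x y > R \<longrightarrow> entry T x y = (\<lambda>i j. 0)" using alg_roeD(3)[OF assms] by blast
  show ?thesis
  proof (rule that[of "max R 0"])
    show "max R 0 \<ge> 0" by simp
    fix x y :: 'a and i j :: nat assume "dist x y > max R 0"
    then have "entry T x y = (\<lambda>i j. 0)" using R by auto
    then show "T (x, i) (y, j) = 0" by (rule entry_zeroD)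
  qed
qed

lemma alg_roe_prop_ex:
  fixes T :: "'a::metric_space \<times> nat \<Rightarrow> 'a \<times> nat \<Rightarrow> complex"
  assumes "T \<in> alg_roe Z"
  shows "\<exists>R\<ge>0. \<forall>x y i j. dist x y > R \<longrightarrow> T (x, i) (y, j) = 0"
proof -
  obtain R where R: "\<forall>x y. dist x y > R \<longrightarrow> entry T x y = (\<lambda>i j. 0)" using alg_roeD(3)[OF assms] by blast
  have "\<forall>x y i j. dist x y > max R 0 \<longrightarrow> T (x, i) (y, j) = 0"
  proof (intro allI impI)
    fix x y :: 'a and i j :: nat assume "dist x y > max R 0"
    then have "entry T x y = (\<lambda>i j. 0)" using R by auto
    then show "T (x, i) (y, j) = 0" by (rule entry_zeroD)
  qed
  then show ?thesis by (intro exI[of _ "max R 0"]) auto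
qed

lemma entry_add: "entry (\<lambda>p q. S p q + T p q) x y = (\<lambda>i j. entry S x y i j + entry T x y i j)"
  unfolding entry_def ..

lemma entry_scale: "entry (\<lambda>p q. c * S p q) x y = (\<lambda>i j. c * entry S x y i j)"
  unfolding entry_def ..

lemma entry_diff: "entry (\<lambda>p q. S p q - T p q) x y = (\<lambda>i j. entry S x y i j - entry T x y i j)"
  unfolding entry_def ..

lemma alg_roeI:
  assumes "bounded_op T" "supported_in Z T" "\<And>x y i j. dist x y > R \<Longrightarrow> T (x, i) (y, j) = 0"
    "\<And>x y. compact_op (entry T x y)"
  shows "T \<in> alg_roe Z"
  unfolding alg_roe_def using assms by (auto simp: entry_def intro!: exI[of _ R] ext)

lemma alg_add:
  assumes S: "S \<in> alg_roe Z" and T: "T \<in> alg_roe Z"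
  shows "(\<lambda>p q. S p q + T p q) \<in> alg_roe Z"
proof -
  obtain R1 where "R1 \<ge> 0" and R1': "\<forall>x y i j. dist x y > R1 \<longrightarrow> S (x, i) (y, j) = 0" using alg_roe_prop_ex[OF S] by blast
  have R1: "\<And>x y i j. dist x y > R1 \<Longrightarrow> S (x, i) (y, j) = 0" using R1' by blast
  obtain R2 where "R2 \<ge> 0" and R2': "\<forall>x y i j. dist x y > R2 \<longrightarrow> T (x, i) (y, j) = 0" using alg_roe_prop_ex[OF T] by blast
  have R2: "\<And>x y i j. dist x y > R2 \<Longrightarrow> T (x, i) (y, j) = 0" using R2' by blast
  show ?thesis
  proof (rule alg_roeI[where R="max R1 R2"])
    show "bounded_op (\<lambda>p q. S p q + T p q)" using opnorm_add[OF alg_roeD(1)[OF S] alg_roeD(1)[OF T]] by simp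
    show "supported_in Z (\<lambda>p q. S p q + T p q)"
      unfolding supported_in_def
    proof (intro allI impI)
      fix p q assume "S p q + T p q \<noteq> 0"
      then have "S p q \<noteq> 0 \<or> T p q \<noteq> 0" by auto
      then show "fst p \<in> Z \<and> fst q \<in> Z"
        using alg_roeD(2)[OF S] alg_roeD(2)[OF T] unfolding supported_in_def by blast
    qed
    show "S (x, i) (y, j) + T (x, i) (y, j) = 0" if "max R1 R2 < dist x y" for x y i j
      using that R1 R2 by simp
    show "compact_op (entry (\<lambda>p q. S p q + T p q) x y)" for x y
      unfolding entry_add using alg_roeD(4)[OF S] alg_roeD(4)[OF T] by (rule compact_add)
  qed
qed

lemma alg_scale:
  assumes S: "S \<in> alg_roe Z"
  shows "(\<lambda>p q. c * S p q) \<in> alg_roe Z"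
proof -
  obtain R1 where "R1 \<ge> 0" and R1': "\<forall>x y i j. dist x y > R1 \<longrightarrow> S (x, i) (y, j) = 0" using alg_roe_prop_ex[OF S] by blast
  have R1: "\<And>x y i j. dist x y > R1 \<Longrightarrow> S (x, i) (y, j) = 0" using R1' by blast
  show ?thesis
  proof (rule alg_roeI[where R="R1"])
    show "bounded_op (\<lambda>p q. c * S p q)" using opnorm_scale[OF alg_roeD(1)[OF S]] by simp
    show "supported_in Z (\<lambda>p q. c * S p q)"
      using alg_roeD(2)[OF S] unfolding supported_in_def by (metis mult_zero_right)
    show "c * S (x, i) (y, j) = 0" if "R1 < dist x y" for x y i j
      using that R1 by simp
    show "compact_op (entry (\<lambda>p q. c * S p q) x y)" for x y
      unfolding entry_scale using alg_roeD(4)[OF S] by (rule compact_scale)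
  qed
qed

lemma bg_finite:
  assumes "bounded_geometry TYPE('a::metric_space)"
  shows "finite {y::'a. dist x y \<le> R}"
proof -
  obtain N where "\<forall>x::'a. finite (cball x R) \<and> card (cball x R) \<le> N"
    using assms unfolding bounded_geometry_def by blast
  then show ?thesis unfolding cball_def by blast
qed

lemma bg_finite':
  assumes "bounded_geometry TYPE('a::metric_space)"
  shows "finite {y::'a. dist y z \<le> R}"
  using bg_finite[OF assms, of z R] by (simp add: dist_commute)

lemma alg_mmul:
  fixes a b :: "'a::metric_space \<times> nat \<Rightarrow> 'a \<times> nat \<Rightarrow> complex"
  assumes bg: "bounded_geometry TYPE('a)" and a: "a \<in> alg_roe Z" and b: "b \<in> alg_roe Z"
  shows "mmul a b \<in> alg_roe Z"
proof -
  obtain R1 where R10: "R1 \<ge> 0" and R1': "\<forall>x y i j. dist x y > R1 \<longrightarrow> a (x, i) (y, j) = 0" using alg_roe_prop_ex[OF a] by blast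
  have R1: "\<And>x y i j. dist x y > R1 \<Longrightarrow> a (x, i) (y, j) = 0" using R1' by blast
  obtain R2 where R20: "R2 \<ge> 0" and R2': "\<forall>x y i j. dist x y > R2 \<longrightarrow> b (x, i) (y, j) = 0" using alg_roe_prop_ex[OF b] by blast
  have R2: "\<And>x y i j. dist x y > R2 \<Longrightarrow> b (x, i) (y, j) = 0" using R2' by blast
  have ab: "bounded_op a" "bounded_op b" using alg_roeD(1) a b by auto
  show ?thesis
  proof (rule alg_roeI[where R="R1 + R2"])
    show "bounded_op (mmul a b)" using mmul_bounded[OF ab] by simp
    show "supported_in Z (mmul a b)"
      unfolding supported_in_def
    proof (intro allI impI)
      fix p r assume nz: "mmul a b p r \<noteq> 0"
      then obtain q where "a p q * b q r \<noteq> 0" using mmul_zero_if[of a p b r] by blast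
      then have "a p q \<noteq> 0" "b q r \<noteq> 0" by auto
      then show "fst p \<in> Z \<and> fst r \<in> Z" using alg_roeD(2)[OF a] alg_roeD(2)[OF b]
        unfolding supported_in_def by blast
    qed
    show "mmul a b (x, i) (z, j) = 0" if d: "R1 + R2 < dist x z" for x z i j
    proof (rule mmul_zero_if)
      fix q :: "'a \<times> nat"
      obtain y k where q: "q = (y, k)" by (cases q)
      have "dist x y > R1 \<or> dist y z > R2" using dist_triangle[of x z y] d by linarith
      then show "a (x, i) q * b q (z, j) = 0" using R1 R2 q by auto
    qed
    show "compact_op (entry (mmul a b) x z)" for x z
    proof -
      have e: "entry (mmul a b) x z = (\<lambda>i j. \<Sum>y\<in>{y. dist x y \<le> R1}. mmul (entry a x y) (entry b y z) i j)"
        by (rule entry_mmul[OF ab bg_finite[OF bg]]) (auto simp: R1)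
      show ?thesis unfolding e
        using alg_roeD(4)[OF a] alg_roeD(4)[OF b] compact_bounded
        by (intro compact_sum bg_finite[OF bg] compact_mmul_right) auto
    qed
  qed
qed

lemma alg_in_roe: "T \<in> alg_roe Z \<Longrightarrow> T \<in> roe Z"
  unfolding roe_def using alg_roeD(1)[of T Z] opnorm_zero[where 'i="'a \<times> nat"]
  by (auto intro!: bexI[of _ T])

lemma roeD: "M \<in> roe Z \<Longrightarrow> bounded_op M"
  "M \<in> roe Z \<Longrightarrow> e > 0 \<Longrightarrow> \<exists>T\<in>alg_roe Z. opnorm (\<lambda>p q. M p q - T p q) < e"
  unfolding roe_def by auto

lemma roe_supported:
  assumes M: "M \<in> roe Z" shows "supported_in Z M"
  unfolding supported_in_def
proof (intro allI impI)
  fix p q assume nz: "M p q \<noteq> 0"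
  obtain T where T: "T \<in> alg_roe Z" "opnorm (\<lambda>p q. M p q - T p q) < cmod (M p q)"
    using roeD(2)[OF M, of "cmod (M p q)"] nz by auto
  have D: "bounded_op (\<lambda>p q. M p q - T p q)" using opnorm_diff[OF roeD(1)[OF M] alg_roeD(1)[OF T(1)]] by simp
  have "cmod (M p q - T p q) \<le> opnorm (\<lambda>p q. M p q - T p q)" using entry_le_opnorm[OF D] .
  then have "T p q \<noteq> 0" using T(2) by auto
  then show "fst p \<in> Z \<and> fst q \<in> Z" using alg_roeD(2)[OF T(1)] unfolding supported_in_def by blast
qed

lemma alg_roe_mono: "Y \<subseteq> Z \<Longrightarrow> alg_roe Y \<subseteq> alg_roe Z"
  unfolding alg_roe_def supported_in_def by blast

lemma roe_mono: "Y \<subseteq> Z \<Longrightarrow> roe Y \<subseteq> roe Z"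
  unfolding roe_def using alg_roe_mono by blast

definition cmp :: "'a set \<Rightarrow> ('a \<times> nat \<Rightarrow> 'a \<times> nat \<Rightarrow> complex) \<Rightarrow> ('a \<times> nat \<Rightarrow> 'a \<times> nat \<Rightarrow> complex)" where
  "cmp Y M = (\<lambda>p q. if fst p \<in> Y \<and> fst q \<in> Y then M p q else 0)"

lemma cmp_bounded: "bounded_op M \<Longrightarrow> bounded_op (cmp Y M) \<and> opnorm (cmp Y M) \<le> opnorm M"
  unfolding cmp_def by (rule opnorm_mask)

lemma cmp_diff: "cmp Y (\<lambda>p q. M p q - T p q) = (\<lambda>p q. cmp Y M p q - cmp Y T p q)"
  unfolding cmp_def by (intro ext) simp

lemma cmp_id: assumes "supported_in Y M" shows "cmp Y M = M"
proof (intro ext)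
  fix p q
  show "cmp Y M p q = M p q"
  proof -
    have "M p q \<noteq> 0 \<longrightarrow> fst p \<in> Y \<and> fst q \<in> Y" using assms unfolding supported_in_def by blast
    then show ?thesis unfolding cmp_def by auto
  qed
qed

lemma entry_cmp: "entry (cmp Y M) x y = (if x \<in> Y \<and> y \<in> Y then entry M x y else (\<lambda>i j. 0))"
  unfolding entry_def cmp_def by auto

lemma cmp_alg:
  assumes T: "T \<in> alg_roe Z" shows "cmp Y T \<in> alg_roe Y"
proof -
  obtain R where "R \<ge> 0" and R': "\<forall>x y i j. dist x y > R \<longrightarrow> T (x, i) (y, j) = 0" using alg_roe_prop_ex[OF T] by blast
  have R: "\<And>x y i j. dist x y > R \<Longrightarrow> T (x, i) (y, j) = 0" using R' by blast
  show ?thesis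
  proof (rule alg_roeI[where R=R])
    show "bounded_op (cmp Y T)" using cmp_bounded[OF alg_roeD(1)[OF T]] by simp
    show "supported_in Y (cmp Y T)" unfolding supported_in_def cmp_def by auto
    show "cmp Y T (x, i) (y, j) = 0" if "R < dist x y" for x y i j using R[OF that] unfolding cmp_def by simp
    show "compact_op (entry (cmp Y T) x y)" for x y
      unfolding entry_cmp using alg_roeD(4)[OF T] compact_zero by simp
  qed
qed

lemma cmp_roe:
  assumes M: "M \<in> roe Z" shows "cmp Y M \<in> roe Y"
  unfolding roe_def
proof (intro CollectI conjI allI impI)
  show "bounded_op (cmp Y M)" using cmp_bounded[OF roeD(1)[OF M]] by simp
  fix e :: real assume e: "e > 0"
  obtain T where T: "T \<in> alg_roe Z" "opnorm (\<lambda>p q. M p q - T p q) < e" using roeD(2)[OF M e] by blast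
  have D: "bounded_op (\<lambda>p q. M p q - T p q)" using opnorm_diff[OF roeD(1)[OF M] alg_roeD(1)[OF T(1)]] by simp
  have "opnorm (\<lambda>p q. cmp Y M p q - cmp Y T p q) \<le> opnorm (\<lambda>p q. M p q - T p q)"
    using cmp_bounded[OF D] unfolding cmp_diff by simp
  then show "\<exists>T\<in>alg_roe Y. opnorm (\<lambda>p q. cmp Y M p q - T p q) < e"
    using T(2) cmp_alg[OF T(1)] by (intro bexI[of _ "cmp Y T"]) auto
qed

lemma roe_Y_iff: "M \<in> roe Y \<longleftrightarrow> M \<in> roe UNIV \<and> supported_in Y M"
proof
  assume "M \<in> roe Y" then show "M \<in> roe UNIV \<and> supported_in Y M"
    using roe_mono[of Y UNIV] roe_supported by blast
next
  assume "M \<in> roe UNIV \<and> supported_in Y M"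
  then show "M \<in> roe Y" using cmp_roe[of M UNIV Y] cmp_id[of Y M] by simp
qed

lemma opnorm_zero_entry: "opnorm (\<lambda>i j::nat. 0::complex) = 0"
  using opnorm_zero by blast

lemma supp_eps_cmp: "e > 0 \<Longrightarrow> supp_eps e (cmp Y M) \<subseteq> supp_eps e M"
  unfolding supp_eps_def entry_cmp using opnorm_zero_entry by (auto split: if_splits)

lemma supp_eps_supported: "e > 0 \<Longrightarrow> supported_in Y M \<Longrightarrow> fst ` supp_eps e M \<subseteq> Y"
proof -
  assume e: "e > 0" and s: "supported_in Y M"
  have "supp_eps e M = supp_eps e (cmp Y M)" using cmp_id[OF s] by simp
  also have "fst ` \<dots> \<subseteq> Y"
    unfolding supp_eps_def entry_cmp using opnorm_zero_entry e by (auto split: if_splits)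
  finally show ?thesis .
qed

lemma pt_ultra: "is_ultrafilter (pt x)"
  unfolding is_ultrafilter_def pt_def by (simp add: eventually_principal principal_eq_bot_iff)

lemma eventually_pt: "eventually P (pt x) \<longleftrightarrow> P x"
  unfolding pt_def by (simp add: eventually_principal)

lemma ultra_filtermap: "is_ultrafilter F \<Longrightarrow> is_ultrafilter (filtermap f F)"
  unfolding is_ultrafilter_def by (simp add: filtermap_bot_iff eventually_filtermap)

lemma topspace_beta: "topspace beta_top = {F. is_ultrafilter F}"
proof -
  have "{F. is_ultrafilter F} = {F. is_ultrafilter F \<and> eventually (\<lambda>x. x \<in> UNIV) F}" by simp
  then have "{F. is_ultrafilter F} \<in> {{F. is_ultrafilter F \<and> eventually (\<lambda>x. x \<in> A) F} | A. True}" by blast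
  then show ?thesis unfolding beta_top_def topology_generated_by_topspace by auto
qed

lemma gen_nbhd:
  assumes "generate_topology_on {{F. is_ultrafilter F \<and> eventually (\<lambda>x. x \<in> A) F} | A. True} T"
  shows "\<And>F. is_ultrafilter F \<Longrightarrow> F \<in> T \<Longrightarrow> \<exists>B. eventually (\<lambda>x. x \<in> B) F \<and> pt ` B \<subseteq> T"
  using assms
proof (induction rule: generate_topology_on.induct)
  case Empty then show ?case by simp
next
  case (Int a b)
  obtain B1 where B1: "eventually (\<lambda>x. x \<in> B1) F" "pt ` B1 \<subseteq> a" using Int by blast
  obtain B2 where B2: "eventually (\<lambda>x. x \<in> B2) F" "pt ` B2 \<subseteq> b" using Int by blast
  have "eventually (\<lambda>x. x \<in> B1 \<inter> B2) F" using eventually_conj[OF B1(1) B2(1)] by simp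
  then show ?case using B1(2) B2(2) by (intro exI[of _ "B1 \<inter> B2"]) auto
next
  case (UN K)
  then obtain k where "k \<in> K" "F \<in> k" by blast
  then obtain B where "eventually (\<lambda>x. x \<in> B) F" "pt ` B \<subseteq> k" using UN by blast
  then show ?case using \<open>k \<in> K\<close> by blast
next
  case (Basis s)
  then obtain A where s: "s = {F. is_ultrafilter F \<and> eventually (\<lambda>x. x \<in> A) F}" by blast
  have "eventually (\<lambda>x. x \<in> A) F" using Basis s by simp
  moreover have "pt ` A \<subseteq> s" unfolding s by (auto simp: pt_ultra eventually_pt)
  ultimately show ?case by blast
qed

lemma bclos_beta: "bclos beta_top A = {F. is_ultrafilter F \<and> eventually (\<lambda>x. x \<in> A) F}"
proof (intro set_eqI iffI)
  fix F assume F: "F \<in> bclos beta_top A"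
  have "F \<in> topspace beta_top" using subsetD[OF closure_of_subset_topspace F[unfolded bclos_def]] .
  then have u: "is_ultrafilter F" unfolding topspace_beta by simp
  show "F \<in> {F. is_ultrafilter F \<and> eventually (\<lambda>x. x \<in> A) F}"
  proof (rule ccontr)
    assume "F \<notin> {F. is_ultrafilter F \<and> eventually (\<lambda>x. x \<in> A) F}"
    then have ev: "eventually (\<lambda>x. x \<notin> A) F" using u unfolding is_ultrafilter_def by auto
    define T where "T = {F. is_ultrafilter F \<and> eventually (\<lambda>x. x \<in> - A) F}"
    have "openin beta_top T" unfolding beta_top_def T_def by (rule topology_generated_by_Basis) blast
    moreover have "F \<in> T" unfolding T_def using u ev by simp
    ultimately have "\<exists>y. y \<in> pt ` A \<and> y \<in> T" using F unfolding bclos_def in_closure_of by simp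
    then obtain y where "y \<in> pt ` A" "y \<in> T" by blast
    then show False unfolding T_def by (auto simp: eventually_pt)
  qed
next
  fix F assume "F \<in> {F. is_ultrafilter F \<and> eventually (\<lambda>x. x \<in> A) F}"
  then have u: "is_ultrafilter F" and ev: "eventually (\<lambda>x. x \<in> A) F" by auto
  show "F \<in> bclos beta_top A" unfolding bclos_def in_closure_of
  proof (intro conjI allI impI)
    show "F \<in> topspace beta_top" unfolding topspace_beta using u by simp
    fix T assume T: "F \<in> T \<and> openin beta_top T"
    then have "generate_topology_on {{F. is_ultrafilter F \<and> eventually (\<lambda>x. x \<in> A) F} | A. True} T"
      unfolding beta_top_def by (simp add: openin_topology_generated_by_iff)
    then have "\<exists>B. eventually (\<lambda>x. x \<in> B) F \<and> pt ` B \<subseteq> T" using u T by (intro gen_nbhd) auto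
    then obtain B where B: "eventually (\<lambda>x. x \<in> B) F" "pt ` B \<subseteq> T" by blast
    have "eventually (\<lambda>x. x \<in> B \<and> x \<in> A) F" using eventually_conj[OF B(1) ev] .
    then have "F = bot \<or> (\<exists>a. a \<in> B \<and> a \<in> A)" by (rule eventually_happens)
    moreover have "F \<noteq> bot" using u unfolding is_ultrafilter_def by simp
    ultimately have "\<exists>a. a \<in> B \<and> a \<in> A" by simp
    then obtain a where "a \<in> B" "a \<in> A" by blast
    then show "\<exists>y. y \<in> pt ` A \<and> y \<in> T" using B(2) by blast
  qed
qed

lemma bclos_mono: assumes AB: "A \<subseteq> B" shows "bclos beta_top A \<subseteq> bclos beta_top B"
proof
  fix F assume "F \<in> bclos beta_top A"
  then have u: "is_ultrafilter F" and ev: "eventually (\<lambda>x. x \<in> A) F" unfolding bclos_beta by auto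
  have "eventually (\<lambda>x. x \<in> B) F" using ev by (rule eventually_mono) (use AB in blast)
  then show "F \<in> bclos beta_top B" unfolding bclos_beta using u by simp
qed

lemma bclos_Un: "bclos T (A \<union> B) = bclos T A \<union> bclos T B"
  unfolding bclos_def by (simp add: image_Un)

lemma nbhd_closure:
  fixes A :: "'a::metric_space set"
  assumes inv: "invariant U" and R: "R \<ge> 0" and hA: "bclos beta_top A \<subseteq> U"
  shows "bclos beta_top {x. \<exists>z\<in>A. dist x z \<le> R} \<subseteq> U"
proof
  fix F assume "F \<in> bclos beta_top {x. \<exists>z\<in>A. dist x z \<le> R}"
  then have u: "is_ultrafilter F" and ev: "eventually (\<lambda>x. x \<in> {x. \<exists>z\<in>A. dist x z \<le> R}) F"
    unfolding bclos_beta by auto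
  define g where "g x = (SOME z. z \<in> A \<and> dist x z \<le> R)" for x
  have g: "g x \<in> A \<and> dist x (g x) \<le> R" if "x \<in> {x. \<exists>z\<in>A. dist x z \<le> R}" for x
  proof -
    have "\<exists>z. z \<in> A \<and> dist x z \<le> R" using that by auto
    then show ?thesis unfolding g_def by (rule someI_ex)
  qed
  define \<gamma> where "\<gamma> = filtermap (\<lambda>x. (x, g x)) F"
  have ev2: "eventually (\<lambda>x. dist x (g x) \<le> R) F"
    using ev by (rule eventually_mono) (use g in blast)
  have ev3: "eventually (\<lambda>x. g x \<in> A) F"
    using ev by (rule eventually_mono) (use g in blast)
  have "is_ultrafilter \<gamma>" unfolding \<gamma>_def by (rule ultra_filtermap[OF u])
  moreover have "eventually (\<lambda>p. p \<in> {(x, y). dist x y \<le> R}) \<gamma>"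
    unfolding \<gamma>_def eventually_filtermap using ev2 by simp
  ultimately have "\<gamma> \<in> bclos beta_top {(x, y). dist x y \<le> R}"
    unfolding bclos_beta by simp
  then have \<gamma>G: "\<gamma> \<in> coarse_groupoid" unfolding coarse_groupoid_def using R by blast
  have "src \<gamma> = filtermap g F" unfolding src_def \<gamma>_def by (simp add: filtermap_filtermap)
  also have "\<dots> \<in> bclos beta_top A"
    unfolding bclos_beta using ultra_filtermap[OF u] ev3
    by (simp add: eventually_filtermap)
  finally have "src \<gamma> \<in> U" using hA by blast
  then have "rng \<gamma> \<in> U" using inv \<gamma>G unfolding invariant_def by blast
  moreover have "rng \<gamma> = F" unfolding rng_def \<gamma>_def by (simp add: filtermap_filtermap filtermap_ident)
  ultimately show "F \<in> U" by simp
qed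

lemma pt_in_betaY: assumes BY: "B \<subseteq> Y" shows "pt ` B \<subseteq> betaY Y"
proof
  fix F assume "F \<in> pt ` B"
  then obtain y where y: "y \<in> B" "F = pt y" by blast
  have "eventually (\<lambda>x. x \<in> Y) (pt y)" unfolding eventually_pt using y BY by blast
  then show "F \<in> betaY Y" unfolding betaY_def bclos_beta using y pt_ultra by simp
qed

lemma bclos_sub:
  assumes "B \<subseteq> Y"
  shows "bclos (subtopology beta_top (betaY Y)) B = bclos beta_top B"
proof -
  have "bclos (subtopology beta_top (betaY Y)) B = betaY Y \<inter> bclos beta_top B"
    unfolding bclos_def closure_of_subtopology using pt_in_betaY[OF assms]
    by (simp add: Int_absorb1)
  also have "\<dots> = bclos beta_top B"
    using bclos_mono[OF assms] unfolding betaY_def by blast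
  finally show ?thesis .
qed

lemma bg_card:
  assumes "bounded_geometry TYPE('a::metric_space)"
  obtains N :: nat where "\<And>x::'a. finite {y. dist x y \<le> R} \<and> card {y. dist x y \<le> R} \<le> N"
proof -
  obtain N where N: "\<forall>x::'a. finite (cball x R) \<and> card (cball x R) \<le> N"
    using assms unfolding bounded_geometry_def by blast
  have "\<And>x::'a. finite {y. dist x y \<le> R} \<and> card {y. dist x y \<le> R} \<le> N"
    using N unfolding cball_def by simp
  then show ?thesis by (rule that)
qed

lemma alg_bounded_entry: "S \<in> alg_roe Z \<Longrightarrow> bounded_op (entry S x y)"
  by (rule conjunct1[OF opnorm_entry[OF alg_roeD(1)]])

lemma supp_left:
  fixes a S :: "'a::metric_space \<times> nat \<Rightarrow> 'a \<times> nat \<Rightarrow> complex"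
  assumes bg: "bounded_geometry TYPE('a)" and a: "a \<in> alg_roe Z" and S: "S \<in> alg_roe Z'" and e: "e > 0"
  obtains R \<delta> where "R \<ge> 0" "\<delta> > 0"
    "fst ` supp_eps e (mmul a S) \<subseteq> {x. \<exists>z \<in> fst ` supp_eps \<delta> S. dist x z \<le> R}"
proof -
  obtain R where R0: "R \<ge> 0" and R': "\<forall>x y i j. dist x y > R \<longrightarrow> a (x, i) (y, j) = 0"
    using alg_roe_prop_ex[OF a] by blast
  obtain N :: nat where N: "\<And>x::'a. finite {y. dist x y \<le> R} \<and> card {y. dist x y \<le> R} \<le> N"
    using bg_card[OF bg] by blast
  have ab: "bounded_op a" "bounded_op S" using alg_roeD(1) a S by auto
  define K where "K = opnorm a + 1"
  have K: "K > 0" unfolding K_def using opnorm_nonneg[OF ab(1)] by simp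
  define \<delta> where "\<delta> = e / ((real N + 1) * K)"
  have \<delta>: "\<delta> > 0" unfolding \<delta>_def using e K by simp
  have main: "\<exists>y. dist x y \<le> R \<and> opnorm (entry S y z) \<ge> \<delta>" if xz: "opnorm (entry (mmul a S) x z) \<ge> e" for x z
  proof (rule ccontr)
    assume "\<not> (\<exists>y. dist x y \<le> R \<and> opnorm (entry S y z) \<ge> \<delta>)"
    then have small: "\<And>y. y \<in> {y. dist x y \<le> R} \<Longrightarrow> opnorm (entry S y z) < \<delta>" by force
    define C where "C = {y. dist x y \<le> R}"
    have C: "finite C" "card C \<le> N" using N unfolding C_def by auto
    have xC: "x \<in> C" unfolding C_def using R0 by simp
    have cardC: "card C > 0" using C(1) xC by (auto simp: card_gt_0_iff)
    have e1: "entry (mmul a S) x z = (\<lambda>i j. \<Sum>y\<in>C. mmul (entry a x y) (entry S y z) i j)"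
      by (rule entry_mmul[OF ab C(1)]) (auto simp: C_def R')
    have bnd: "bounded_op (mmul (entry a x y) (entry S y z)) \<and>
        opnorm (mmul (entry a x y) (entry S y z)) \<le> opnorm (entry a x y) * opnorm (entry S y z)" for y
      using mmul_bounded[OF alg_bounded_entry[OF a] alg_bounded_entry[OF S]] .
    have "opnorm (entry (mmul a S) x z) \<le> (\<Sum>y\<in>C. opnorm (mmul (entry a x y) (entry S y z)))"
    proof -
      have bs: "bounded_op (\<lambda>i j. \<Sum>y\<in>C. mmul (entry a x y) (entry S y z) i j) \<and>
          opnorm (\<lambda>i j. \<Sum>y\<in>C. mmul (entry a x y) (entry S y z) i j) \<le> (\<Sum>y\<in>C. opnorm (mmul (entry a x y) (entry S y z)))"
        by (rule bounded_sum[OF C(1)]) (use bnd in simp)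
      show ?thesis unfolding e1 by (rule conjunct2[OF bs])
    qed
    also have "\<dots> \<le> (\<Sum>y\<in>C. K * opnorm (entry S y z))"
    proof (rule sum_mono)
      fix y assume "y \<in> C"
      have "opnorm (entry a x y) \<le> K" unfolding K_def using conjunct2[OF opnorm_entry[OF ab(1), of x y]] by linarith
      then have "opnorm (entry a x y) * opnorm (entry S y z) \<le> K * opnorm (entry S y z)"
        using opnorm_nonneg[OF alg_bounded_entry[OF S]] by (rule mult_right_mono)
      then show "opnorm (mmul (entry a x y) (entry S y z)) \<le> K * opnorm (entry S y z)"
        using bnd[of y] by linarith
    qed
    also have "\<dots> < of_nat (card C) * (K * \<delta>)"
      using small K cardC unfolding C_def by (intro sum_bounded_above_strict) auto
    also have "\<dots> \<le> (real N + 1) * (K * \<delta>)"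
      using C(2) K \<delta> by (intro mult_right_mono) auto
    also have "\<dots> = e" unfolding \<delta>_def using K by simp
    finally show False using xz by simp
  qed
  show ?thesis
  proof (rule that[OF R0 \<delta>])
    show "fst ` supp_eps e (mmul a S) \<subseteq> {x. \<exists>z\<in>fst ` supp_eps \<delta> S. dist x z \<le> R}"
    proof
      fix x assume "x \<in> fst ` supp_eps e (mmul a S)"
      then obtain z where "opnorm (entry (mmul a S) x z) \<ge> e" unfolding supp_eps_def by auto
      then obtain y where "dist x y \<le> R" "opnorm (entry S y z) \<ge> \<delta>" using main by blast
      then show "x \<in> {x. \<exists>z\<in>fst ` supp_eps \<delta> S. dist x z \<le> R}"
        unfolding supp_eps_def by (auto intro!: bexI[of _ y] image_eqI[of _ _ "(y, z)"])
    qed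
  qed
qed

lemma supp_right:
  fixes b S :: "'a::metric_space \<times> nat \<Rightarrow> 'a \<times> nat \<Rightarrow> complex"
  assumes bg: "bounded_geometry TYPE('a)" and b: "b \<in> alg_roe Z" and S: "S \<in> alg_roe Z'" and e: "e > 0"
  obtains \<delta> where "\<delta> > 0" "fst ` supp_eps e (mmul S b) \<subseteq> fst ` supp_eps \<delta> S"
proof -
  obtain R where R0: "R \<ge> 0" and R': "\<forall>x y i j. dist x y > R \<longrightarrow> b (x, i) (y, j) = 0"
    using alg_roe_prop_ex[OF b] by blast
  obtain N :: nat where N: "\<And>x::'a. finite {y. dist x y \<le> R} \<and> card {y. dist x y \<le> R} \<le> N"
    using bg_card[OF bg] by blast
  have ab: "bounded_op S" "bounded_op b" using alg_roeD(1) b S by auto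
  define K where "K = opnorm b + 1"
  have K: "K > 0" unfolding K_def using opnorm_nonneg[OF ab(2)] by simp
  define \<delta> where "\<delta> = e / ((real N + 1) * K)"
  have \<delta>: "\<delta> > 0" unfolding \<delta>_def using e K by simp
  have main: "\<exists>y. opnorm (entry S x y) \<ge> \<delta>" if xz: "opnorm (entry (mmul S b) x z) \<ge> e" for x z
  proof (rule ccontr)
    assume "\<not> (\<exists>y. opnorm (entry S x y) \<ge> \<delta>)"
    then have small: "\<And>y. opnorm (entry S x y) < \<delta>" by (simp add: not_le)
    define C where "C = {y. dist z y \<le> R}"
    have C: "finite C" "card C \<le> N" using N unfolding C_def by auto
    have xC: "z \<in> C" unfolding C_def using R0 by simp
    have cardC: "card C > 0" using C(1) xC by (auto simp: card_gt_0_iff)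
    have e1: "entry (mmul S b) x z = (\<lambda>i j. \<Sum>y\<in>C. mmul (entry S x y) (entry b y z) i j)"
      by (rule entry_mmul[OF ab C(1)]) (auto simp: C_def R' dist_commute)
    have bnd: "bounded_op (mmul (entry S x y) (entry b y z)) \<and>
        opnorm (mmul (entry S x y) (entry b y z)) \<le> opnorm (entry S x y) * opnorm (entry b y z)" for y
      using mmul_bounded[OF alg_bounded_entry[OF S] alg_bounded_entry[OF b]] .
    have "opnorm (entry (mmul S b) x z) \<le> (\<Sum>y\<in>C. opnorm (mmul (entry S x y) (entry b y z)))"
    proof -
      have bs: "bounded_op (\<lambda>i j. \<Sum>y\<in>C. mmul (entry S x y) (entry b y z) i j) \<and>
          opnorm (\<lambda>i j. \<Sum>y\<in>C. mmul (entry S x y) (entry b y z) i j) \<le> (\<Sum>y\<in>C. opnorm (mmul (entry S x y) (entry b y z)))"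
        by (rule bounded_sum[OF C(1)]) (use bnd in simp)
      show ?thesis unfolding e1 by (rule conjunct2[OF bs])
    qed
    also have "\<dots> \<le> (\<Sum>y\<in>C. K * opnorm (entry S x y))"
    proof (rule sum_mono)
      fix y assume "y \<in> C"
      have "opnorm (entry b y z) \<le> K" unfolding K_def using conjunct2[OF opnorm_entry[OF ab(2), of y z]] by linarith
      then have "opnorm (entry S x y) * opnorm (entry b y z) \<le> opnorm (entry S x y) * K"
        using opnorm_nonneg[OF alg_bounded_entry[OF S]] by (rule mult_left_mono)
      then show "opnorm (mmul (entry S x y) (entry b y z)) \<le> K * opnorm (entry S x y)"
        using bnd[of y] by (simp add: mult.commute)
    qed
    also have "\<dots> < of_nat (card C) * (K * \<delta>)"
      using small K cardC by (intro sum_bounded_above_strict) auto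
    also have "\<dots> \<le> (real N + 1) * (K * \<delta>)"
      using C(2) K \<delta> by (intro mult_right_mono) auto
    also have "\<dots> = e" unfolding \<delta>_def using K by simp
    finally show False using xz by simp
  qed
  show ?thesis
  proof (rule that[OF \<delta>])
    show "fst ` supp_eps e (mmul S b) \<subseteq> fst ` supp_eps \<delta> S"
    proof
      fix x assume "x \<in> fst ` supp_eps e (mmul S b)"
      then obtain z where "opnorm (entry (mmul S b) x z) \<ge> e" unfolding supp_eps_def by auto
      then obtain y where "opnorm (entry S x y) \<ge> \<delta>" using main by blast
      then show "x \<in> fst ` supp_eps \<delta> S"
        unfolding supp_eps_def by (auto intro!: image_eqI[of _ _ "(x, y)"])
    qed
  qed
qed

lemma supp_add:
  assumes S: "S \<in> alg_roe Z" and T: "T \<in> alg_roe Z"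
  shows "supp_eps e (\<lambda>p q. S p q + T p q) \<subseteq> supp_eps (e/2) S \<union> supp_eps (e/2) T"
proof
  fix xy assume xy: "xy \<in> supp_eps e (\<lambda>p q. S p q + T p q)"
  obtain x y where xy': "xy = (x, y)" by (cases xy)
  have "opnorm (entry (\<lambda>p q. S p q + T p q) x y) \<ge> e" using xy xy' unfolding supp_eps_def by simp
  moreover have "opnorm (entry (\<lambda>p q. S p q + T p q) x y) \<le> opnorm (entry S x y) + opnorm (entry T x y)"
    unfolding entry_add using opnorm_add[OF alg_bounded_entry[OF S] alg_bounded_entry[OF T]] by simp
  ultimately have "opnorm (entry S x y) \<ge> e/2 \<or> opnorm (entry T x y) \<ge> e/2" by linarith
  then show "xy \<in> supp_eps (e/2) S \<union> supp_eps (e/2) T" unfolding supp_eps_def xy' by auto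
qed

lemma supp_scale:
  assumes S: "S \<in> alg_roe Z" and e: "e > 0"
  shows "supp_eps e (\<lambda>p q. c * S p q) \<subseteq> supp_eps (e / (cmod c + 1)) S"
proof
  fix xy assume xy: "xy \<in> supp_eps e (\<lambda>p q. c * S p q)"
  obtain x y where xy': "xy = (x, y)" by (cases xy)
  have "opnorm (entry (\<lambda>p q. c * S p q) x y) \<ge> e" using xy xy' unfolding supp_eps_def by simp
  moreover have "opnorm (entry (\<lambda>p q. c * S p q) x y) \<le> cmod c * opnorm (entry S x y)"
    unfolding entry_scale using opnorm_scale[OF alg_bounded_entry[OF S]] by simp
  moreover have "cmod c * opnorm (entry S x y) \<le> (cmod c + 1) * opnorm (entry S x y)"
    using opnorm_nonneg[OF alg_bounded_entry[OF S]] by (intro mult_right_mono) auto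
  ultimately have "e \<le> (cmod c + 1) * opnorm (entry S x y)" by linarith
  then have "e / (cmod c + 1) \<le> opnorm (entry S x y)"
    using norm_ge_zero[of c] by (simp add: divide_le_eq mult.commute add_nonneg_pos)
  then show "xy \<in> supp_eps (e / (cmod c + 1)) S" unfolding supp_eps_def xy' by auto
qed

lemma supp_mono: "e1 \<le> e2 \<Longrightarrow> supp_eps e2 S \<subseteq> supp_eps e1 S"
  unfolding supp_eps_def by auto

lemma approx_add:
  assumes "bounded_op M1" "bounded_op M2" "bounded_op S1" "bounded_op S2"
    "opnorm (\<lambda>p q. M1 p q - S1 p q) < d1" "opnorm (\<lambda>p q. M2 p q - S2 p q) < d2"
  shows "opnorm (\<lambda>p q. (M1 p q + M2 p q) - (S1 p q + S2 p q)) < d1 + d2"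
proof -
  have D1: "bounded_op (\<lambda>p q. M1 p q - S1 p q)" using opnorm_diff[OF assms(1,3)] by simp
  have D2: "bounded_op (\<lambda>p q. M2 p q - S2 p q)" using opnorm_diff[OF assms(2,4)] by simp
  have eq: "(\<lambda>p q. (M1 p q + M2 p q) - (S1 p q + S2 p q)) = (\<lambda>p q. (M1 p q - S1 p q) + (M2 p q - S2 p q))"
    by (simp add: algebra_simps)
  show ?thesis unfolding eq using conjunct2[OF opnorm_add[OF D1 D2]] assms(5,6) by linarith
qed

lemma approx_scale:
  assumes "bounded_op M" "bounded_op S"
  shows "opnorm (\<lambda>p q. c * M p q - c * S p q) \<le> cmod c * opnorm (\<lambda>p q. M p q - S p q)"
proof -
  have D: "bounded_op (\<lambda>p q. M p q - S p q)" using opnorm_diff[OF assms] by simp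
  have eq: "(\<lambda>p q. c * M p q - c * S p q) = (\<lambda>p q. c * (M p q - S p q))"
    by (simp add: algebra_simps)
  show ?thesis unfolding eq using conjunct2[OF opnorm_scale[OF D]] .
qed

lemma approx_trans:
  assumes "bounded_op M" "bounded_op T" "bounded_op S"
  shows "opnorm (\<lambda>p q. M p q - S p q) \<le> opnorm (\<lambda>p q. M p q - T p q) + opnorm (\<lambda>p q. T p q - S p q)"
proof -
  have D1: "bounded_op (\<lambda>p q. M p q - T p q)" using opnorm_diff[OF assms(1,2)] by simp
  have D2: "bounded_op (\<lambda>p q. T p q - S p q)" using opnorm_diff[OF assms(2,3)] by simp
  show ?thesis using conjunct2[OF opnorm_triangle[OF D1 D2]] .
qed

lemma opnorm_le_via:
  assumes a: "bounded_op a" and a': "bounded_op a'"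
  shows "opnorm a' \<le> opnorm a + opnorm (\<lambda>p q. a p q - a' p q)"
proof -
  have D: "bounded_op (\<lambda>p q. a p q - a' p q)" using opnorm_diff[OF a a'] by simp
  have eq: "(\<lambda>p q. a p q - (a p q - a' p q)) = a'" by simp
  show ?thesis using conjunct2[OF opnorm_diff[OF a D]] unfolding eq .
qed

lemma approx_mmul:
  fixes a b :: "'i \<Rightarrow> 'i \<Rightarrow> complex"
  assumes a: "bounded_op a" and b: "bounded_op b"
    and As: "\<And>x. x \<in> As \<Longrightarrow> bounded_op x" and Bs: "\<And>x. x \<in> Bs \<Longrightarrow> bounded_op x"
    and ha: "\<And>d. d > 0 \<Longrightarrow> \<exists>a'\<in>As. opnorm (\<lambda>p q. a p q - a' p q) < d"
    and hb: "\<And>d. d > 0 \<Longrightarrow> \<exists>b'\<in>Bs. opnorm (\<lambda>p q. b p q - b' p q) < d"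
    and e: "e > 0"
  shows "\<exists>a'\<in>As. \<exists>b'\<in>Bs. opnorm (\<lambda>p r. mmul a b p r - mmul a' b' p r) < e"
proof -
  define Sa where "Sa = opnorm a"
  define Sb where "Sb = opnorm b"
  have Sa: "Sa \<ge> 0" and Sb: "Sb \<ge> 0" unfolding Sa_def Sb_def using opnorm_nonneg a b by auto
  define d where "d = min 1 (e / (Sa + Sb + 2))"
  have d0: "d > 0" unfolding d_def using e Sa Sb by simp
  have d1: "d \<le> 1" unfolding d_def by simp
  have d2: "d * (Sa + Sb + 2) \<le> e"
  proof -
    have "d \<le> e / (Sa + Sb + 2)" unfolding d_def by simp
    moreover have "Sa + Sb + 2 > 0" using Sa Sb by simp
    ultimately show ?thesis by (simp add: pos_le_divide_eq)
  qed
  obtain a' where a': "a' \<in> As" "opnorm (\<lambda>p q. a p q - a' p q) < d" using ha[OF d0] by blast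
  obtain b' where b': "b' \<in> Bs" "opnorm (\<lambda>p q. b p q - b' p q) < d" using hb[OF d0] by blast
  have ab': "bounded_op a'" "bounded_op b'" using As Bs a'(1) b'(1) by auto
  have Da: "bounded_op (\<lambda>p q. a p q - a' p q)" using opnorm_diff[OF a ab'(1)] by simp
  have Db: "bounded_op (\<lambda>p q. b p q - b' p q)" using opnorm_diff[OF b ab'(2)] by simp
  have na': "opnorm a' \<le> Sa + 1" using opnorm_le_via[OF a ab'(1)] a'(2) d1 unfolding Sa_def by linarith
  have "opnorm (\<lambda>p r. mmul a b p r - mmul a' b' p r) \<le>
      opnorm (\<lambda>p q. a p q - a' p q) * opnorm b + opnorm a' * opnorm (\<lambda>p q. b p q - b' p q)"
    using conjunct2[OF mmul_approx[OF a ab'(1) b ab'(2)]] .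
  also have "\<dots> \<le> d * Sb + (Sa + 1) * opnorm (\<lambda>p q. b p q - b' p q)"
    using a'(2) Sb na' opnorm_nonneg[OF Db] opnorm_nonneg[OF ab'(1)] unfolding Sb_def
    by (intro add_mono mult_right_mono) auto
  also have "\<dots> < d * Sb + (Sa + 1) * d"
    using b'(2) Sa by (intro add_strict_left_mono mult_strict_left_mono) auto
  also have "\<dots> \<le> e" using d2 d0 by (simp add: algebra_simps)
  finally show ?thesis using a'(1) b'(1) by blast
qed

definition gX :: "'a::metric_space filter set \<Rightarrow> ('a \<times> nat \<Rightarrow> 'a \<times> nat \<Rightarrow> complex) set" where
  "gX U = {S\<in>alg_roe UNIV. \<forall>e>0. bclos beta_top (fst ` supp_eps e S) \<subseteq> U}"

definition KX :: "'a::metric_space filter set \<Rightarrow> ('a \<times> nat \<Rightarrow> 'a \<times> nat \<Rightarrow> complex) set" where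
  "KX U = {M \<in> roe UNIV. \<forall>e>0. \<exists>S\<in>gX U. opnorm (\<lambda>p q. M p q - S p q) < e}"

lemma gX_alg: "S \<in> gX U \<Longrightarrow> S \<in> alg_roe UNIV"
  unfolding gX_def by simp

lemma gX_cond: "S \<in> gX U \<Longrightarrow> e > 0 \<Longrightarrow> bclos beta_top (fst ` supp_eps e S) \<subseteq> U"
  unfolding gX_def by simp

lemma gX_add:
  assumes S: "S \<in> gX U" and T: "T \<in> gX U"
  shows "(\<lambda>p q. S p q + T p q) \<in> gX U"
  unfolding gX_def
proof (intro CollectI conjI allI impI)
  show "(\<lambda>p q. S p q + T p q) \<in> alg_roe UNIV" using alg_add[OF gX_alg[OF S] gX_alg[OF T]] .
  fix e :: real assume e: "e > 0"
  have "fst ` supp_eps e (\<lambda>p q. S p q + T p q) \<subseteq> fst ` supp_eps (e/2) S \<union> fst ` supp_eps (e/2) T"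
    using supp_add[OF gX_alg[OF S] gX_alg[OF T], of e] by blast
  then have "bclos beta_top (fst ` supp_eps e (\<lambda>p q. S p q + T p q)) \<subseteq> bclos beta_top (fst ` supp_eps (e/2) S \<union> fst ` supp_eps (e/2) T)"
    by (rule bclos_mono)
  then have "bclos beta_top (fst ` supp_eps e (\<lambda>p q. S p q + T p q)) \<subseteq> bclos beta_top (fst ` supp_eps (e/2) S) \<union> bclos beta_top (fst ` supp_eps (e/2) T)"
    unfolding bclos_Un .
  also have "\<dots> \<subseteq> U" using gX_cond[OF S, of "e/2"] gX_cond[OF T, of "e/2"] e by simp
  finally show "bclos beta_top (fst ` supp_eps e (\<lambda>p q. S p q + T p q)) \<subseteq> U" .
qed

lemma gX_scale:
  assumes S: "S \<in> gX U"
  shows "(\<lambda>p q. c * S p q) \<in> gX U"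
  unfolding gX_def
proof (intro CollectI conjI allI impI)
  show "(\<lambda>p q. c * S p q) \<in> alg_roe UNIV" using alg_scale[OF gX_alg[OF S]] .
  fix e :: real assume e: "e > 0"
  have ep: "e / (cmod c + 1) > 0" using e norm_ge_zero[of c] by (intro divide_pos_pos) linarith+
  have "bclos beta_top (fst ` supp_eps e (\<lambda>p q. c * S p q)) \<subseteq> bclos beta_top (fst ` supp_eps (e / (cmod c + 1)) S)"
    using supp_scale[OF gX_alg[OF S] e, of c] by (intro bclos_mono image_mono)
  also have "\<dots> \<subseteq> U" using gX_cond[OF S ep] .
  finally show "bclos beta_top (fst ` supp_eps e (\<lambda>p q. c * S p q)) \<subseteq> U" .
qed

lemma gX_mmul_left:
  assumes bg: "bounded_geometry TYPE('a::metric_space)" and inv: "invariant U"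
    and a: "a \<in> alg_roe (UNIV :: 'a set)" and S: "S \<in> gX U"
  shows "mmul a S \<in> gX U"
  unfolding gX_def
proof (intro CollectI conjI allI impI)
  show "mmul a S \<in> alg_roe UNIV" using alg_mmul[OF bg a gX_alg[OF S]] .
  fix e :: real assume e: "e > 0"
  obtain R \<delta> where R: "R \<ge> 0" and \<delta>: "\<delta> > 0"
    and sub: "fst ` supp_eps e (mmul a S) \<subseteq> {x. \<exists>z \<in> fst ` supp_eps \<delta> S. dist x z \<le> R}"
    using supp_left[OF bg a gX_alg[OF S] e] by blast
  have "bclos beta_top (fst ` supp_eps e (mmul a S)) \<subseteq> bclos beta_top {x. \<exists>z \<in> fst ` supp_eps \<delta> S. dist x z \<le> R}"
    using sub by (rule bclos_mono)
  also have "\<dots> \<subseteq> U" using nbhd_closure[OF inv R gX_cond[OF S \<delta>]] .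
  finally show "bclos beta_top (fst ` supp_eps e (mmul a S)) \<subseteq> U" .
qed

lemma gX_mmul_right:
  assumes bg: "bounded_geometry TYPE('a::metric_space)"
    and b: "b \<in> alg_roe (UNIV :: 'a set)" and S: "S \<in> gX U"
  shows "mmul S b \<in> gX U"
  unfolding gX_def
proof (intro CollectI conjI allI impI)
  show "mmul S b \<in> alg_roe UNIV" using alg_mmul[OF bg gX_alg[OF S] b] .
  fix e :: real assume e: "e > 0"
  obtain \<delta> where \<delta>: "\<delta> > 0" and sub: "fst ` supp_eps e (mmul S b) \<subseteq> fst ` supp_eps \<delta> S"
    using supp_right[OF bg b gX_alg[OF S] e] by blast
  have "bclos beta_top (fst ` supp_eps e (mmul S b)) \<subseteq> bclos beta_top (fst ` supp_eps \<delta> S)"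
    using sub by (rule bclos_mono)
  also have "\<dots> \<subseteq> U" using gX_cond[OF S \<delta>] .
  finally show "bclos beta_top (fst ` supp_eps e (mmul S b)) \<subseteq> U" .
qed

lemma roe_add:
  assumes M1: "M1 \<in> roe Z" and M2: "M2 \<in> roe Z"
  shows "(\<lambda>p q. M1 p q + M2 p q) \<in> roe Z"
  unfolding roe_def
proof (intro CollectI conjI allI impI)
  show "bounded_op (\<lambda>p q. M1 p q + M2 p q)" using opnorm_add[OF roeD(1)[OF M1] roeD(1)[OF M2]] by simp
  fix e :: real assume e: "e > 0"
  obtain T1 where T1: "T1 \<in> alg_roe Z" "opnorm (\<lambda>p q. M1 p q - T1 p q) < e/2" using roeD(2)[OF M1, of "e/2"] e by auto
  obtain T2 where T2: "T2 \<in> alg_roe Z" "opnorm (\<lambda>p q. M2 p q - T2 p q) < e/2" using roeD(2)[OF M2, of "e/2"] e by auto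
  have "opnorm (\<lambda>p q. (M1 p q + M2 p q) - (T1 p q + T2 p q)) < e/2 + e/2"
    using approx_add[OF roeD(1)[OF M1] roeD(1)[OF M2] alg_roeD(1)[OF T1(1)] alg_roeD(1)[OF T2(1)] T1(2) T2(2)] .
  then show "\<exists>T\<in>alg_roe Z. opnorm (\<lambda>p q. M1 p q + M2 p q - T p q) < e"
    using alg_add[OF T1(1) T2(1)] by (intro bexI[of _ "\<lambda>p q. T1 p q + T2 p q"]) auto
qed

lemma roe_scale:
  assumes M: "M \<in> roe Z"
  shows "(\<lambda>p q. c * M p q) \<in> roe Z"
  unfolding roe_def
proof (intro CollectI conjI allI impI)
  show "bounded_op (\<lambda>p q. c * M p q)" using opnorm_scale[OF roeD(1)[OF M]] by simp
  fix e :: real assume e: "e > 0"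
  have ep: "e / (cmod c + 1) > 0" using e norm_ge_zero[of c] by (intro divide_pos_pos) linarith+
  obtain T where T: "T \<in> alg_roe Z" "opnorm (\<lambda>p q. M p q - T p q) < e / (cmod c + 1)" using roeD(2)[OF M ep] by auto
  have D: "bounded_op (\<lambda>p q. M p q - T p q)" using opnorm_diff[OF roeD(1)[OF M] alg_roeD(1)[OF T(1)]] by simp
  have "opnorm (\<lambda>p q. c * M p q - c * T p q) \<le> cmod c * opnorm (\<lambda>p q. M p q - T p q)"
    by (rule approx_scale[OF roeD(1)[OF M] alg_roeD(1)[OF T(1)]])
  also have "\<dots> \<le> (cmod c + 1) * opnorm (\<lambda>p q. M p q - T p q)"
    using opnorm_nonneg[OF D] by (intro mult_right_mono) auto
  also have "\<dots> < (cmod c + 1) * (e / (cmod c + 1))"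
    using T(2) norm_ge_zero[of c] by (intro mult_strict_left_mono) linarith+
  also have "\<dots> = e" proof - have "cmod c + 1 \<noteq> 0" using norm_ge_zero[of c] by linarith then show ?thesis by simp qed
  finally show "\<exists>T\<in>alg_roe Z. opnorm (\<lambda>p q. c * M p q - T p q) < e"
    using alg_scale[OF T(1)] by (intro bexI[of _ "\<lambda>p q. c * T p q"]) auto
qed

lemma roe_mmul:
  assumes bg: "bounded_geometry TYPE('a::metric_space)"
    and a: "a \<in> roe (Z :: 'a set)" and b: "b \<in> roe Z"
  shows "mmul a b \<in> roe Z"
  unfolding roe_def
proof (intro CollectI conjI allI impI)
  show "bounded_op (mmul a b)" using mmul_bounded[OF roeD(1)[OF a] roeD(1)[OF b]] by simp
  fix e :: real assume e: "e > 0"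
  have "\<exists>a'\<in>alg_roe Z. \<exists>b'\<in>alg_roe Z. opnorm (\<lambda>p r. mmul a b p r - mmul a' b' p r) < e"
    by (rule approx_mmul[OF roeD(1)[OF a] roeD(1)[OF b] alg_roeD(1) alg_roeD(1) roeD(2)[OF a] roeD(2)[OF b] e])
  then obtain a' b' where ab': "a' \<in> alg_roe Z" "b' \<in> alg_roe Z" "opnorm (\<lambda>p r. mmul a b p r - mmul a' b' p r) < e"
    by blast
  show "\<exists>T\<in>alg_roe Z. opnorm (\<lambda>p q. mmul a b p q - T p q) < e"
    by (rule bexI[of _ "mmul a' b'"]) (rule ab'(3), rule alg_mmul[OF bg ab'(1) ab'(2)])
qed

definition isJ :: "('i \<Rightarrow> 'i \<Rightarrow> complex) set \<Rightarrow> ('i \<Rightarrow> 'i \<Rightarrow> complex) set \<Rightarrow> ('i \<Rightarrow> 'i \<Rightarrow> complex) set \<Rightarrow> bool" where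
  "isJ A S J \<longleftrightarrow> J \<subseteq> A \<and> S \<subseteq> J \<and>
      (\<forall>a\<in>J. \<forall>b\<in>J. (\<lambda>p q. a p q + b p q) \<in> J) \<and> (\<forall>c::complex. \<forall>a\<in>J. (\<lambda>p q. c * a p q) \<in> J) \<and>
      (\<forall>a\<in>J. \<forall>b\<in>A. mmul a b \<in> J \<and> mmul b a \<in> J) \<and>
      (\<forall>M\<in>A. (\<forall>e>0. \<exists>T\<in>J. opnorm (\<lambda>p q. M p q - T p q) < e) \<longrightarrow> M \<in> J)"

lemma cig_eq: "closed_ideal_gen A S = \<Inter>{J. isJ A S J}"
  unfolding closed_ideal_gen_def isJ_def ..

lemma cig_lower: "isJ A S J \<Longrightarrow> closed_ideal_gen A S \<subseteq> J"
  unfolding cig_eq by blast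

lemma cig_intro: "(\<And>J. isJ A S J \<Longrightarrow> x \<in> J) \<Longrightarrow> x \<in> closed_ideal_gen A S"
  unfolding cig_eq by blast

lemma gX_in_KX: "S \<in> gX U \<Longrightarrow> S \<in> KX U"
  unfolding KX_def
proof (intro CollectI conjI allI impI)
  assume S: "S \<in> gX U"
  show "S \<in> roe UNIV" using alg_in_roe[OF gX_alg[OF S]] .
  fix e :: real assume e: "e > 0"
  have "opnorm (\<lambda>p q. S p q - S p q) = 0" unfolding diff_self_zero using opnorm_zero by blast
  then show "\<exists>T\<in>gX U. opnorm (\<lambda>p q. S p q - T p q) < e" using S e by (intro bexI[of _ S]) auto
qed

lemma KX_roe: "M \<in> KX U \<Longrightarrow> M \<in> roe UNIV"
  unfolding KX_def by simp

lemma KX_approx: "M \<in> KX U \<Longrightarrow> d > 0 \<Longrightarrow> \<exists>S\<in>gX U. opnorm (\<lambda>p q. M p q - S p q) < d"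
  unfolding KX_def by simp

lemma gX_bounded: "S \<in> gX U \<Longrightarrow> bounded_op S"
  using alg_roeD(1)[OF gX_alg] .

lemma KX_isJ:
  assumes bg: "bounded_geometry TYPE('a::metric_space)" and inv: "invariant (U :: 'a filter set)"
  shows "isJ (roe UNIV) (gX U) (KX U)"
  unfolding isJ_def
proof (intro conjI ballI allI impI)
  show "KX U \<subseteq> roe UNIV" using KX_roe by blast
  show "gX U \<subseteq> KX U" using gX_in_KX by blast
next
  fix a b :: "'a \<times> nat \<Rightarrow> 'a \<times> nat \<Rightarrow> complex" assume a: "a \<in> KX U" and b: "b \<in> KX U"
  show "(\<lambda>p q. a p q + b p q) \<in> KX U"
    unfolding KX_def
  proof (intro CollectI conjI allI impI)
    show "(\<lambda>p q. a p q + b p q) \<in> roe UNIV" using roe_add[OF KX_roe[OF a] KX_roe[OF b]] .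
    fix e :: real assume e: "e > 0"
    obtain S1 where S1: "S1 \<in> gX U" "opnorm (\<lambda>p q. a p q - S1 p q) < e/2" using KX_approx[OF a, of "e/2"] e by auto
    obtain S2 where S2: "S2 \<in> gX U" "opnorm (\<lambda>p q. b p q - S2 p q) < e/2" using KX_approx[OF b, of "e/2"] e by auto
    have "opnorm (\<lambda>p q. (a p q + b p q) - (S1 p q + S2 p q)) < e/2 + e/2"
      by (rule approx_add[OF roeD(1)[OF KX_roe[OF a]] roeD(1)[OF KX_roe[OF b]] gX_bounded[OF S1(1)] gX_bounded[OF S2(1)] S1(2) S2(2)])
    then show "\<exists>S\<in>gX U. opnorm (\<lambda>p q. a p q + b p q - S p q) < e"
      using gX_add[OF S1(1) S2(1)] by (intro bexI[of _ "\<lambda>p q. S1 p q + S2 p q"]) auto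
  qed
next
  fix c :: complex and a :: "'a \<times> nat \<Rightarrow> 'a \<times> nat \<Rightarrow> complex" assume a: "a \<in> KX U"
  show "(\<lambda>p q. c * a p q) \<in> KX U"
    unfolding KX_def
  proof (intro CollectI conjI allI impI)
    show "(\<lambda>p q. c * a p q) \<in> roe UNIV" using roe_scale[OF KX_roe[OF a]] .
    fix e :: real assume e: "e > 0"
    have ep: "e / (cmod c + 1) > 0" using e norm_ge_zero[of c] by (intro divide_pos_pos) linarith+
    obtain S where S: "S \<in> gX U" "opnorm (\<lambda>p q. a p q - S p q) < e / (cmod c + 1)" using KX_approx[OF a ep] by auto
    have D: "bounded_op (\<lambda>p q. a p q - S p q)" using opnorm_diff[OF roeD(1)[OF KX_roe[OF a]] gX_bounded[OF S(1)]] by simp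
    have "opnorm (\<lambda>p q. c * a p q - c * S p q) \<le> cmod c * opnorm (\<lambda>p q. a p q - S p q)"
      by (rule approx_scale[OF roeD(1)[OF KX_roe[OF a]] gX_bounded[OF S(1)]])
    also have "\<dots> \<le> (cmod c + 1) * opnorm (\<lambda>p q. a p q - S p q)"
      using opnorm_nonneg[OF D] by (intro mult_right_mono) auto
    also have "\<dots> < (cmod c + 1) * (e / (cmod c + 1))"
      using S(2) norm_ge_zero[of c] by (intro mult_strict_left_mono) linarith+
    also have "\<dots> = e" proof - have "cmod c + 1 \<noteq> 0" using norm_ge_zero[of c] by linarith then show ?thesis by simp qed
    finally show "\<exists>S\<in>gX U. opnorm (\<lambda>p q. c * a p q - S p q) < e"
      using gX_scale[OF S(1)] by (intro bexI[of _ "\<lambda>p q. c * S p q"]) auto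
  qed
next
  fix a b :: "'a \<times> nat \<Rightarrow> 'a \<times> nat \<Rightarrow> complex" assume a: "a \<in> KX U" and b: "b \<in> roe UNIV"
  have ar: "a \<in> roe UNIV" using KX_roe[OF a] .
  show "mmul a b \<in> KX U"
    unfolding KX_def
  proof (intro CollectI conjI allI impI)
    show "mmul a b \<in> roe UNIV" using roe_mmul[OF bg ar b] .
    fix e :: real assume e: "e > 0"
    have "\<exists>a'\<in>gX U. \<exists>b'\<in>alg_roe UNIV. opnorm (\<lambda>p r. mmul a b p r - mmul a' b' p r) < e"
      by (rule approx_mmul[OF roeD(1)[OF ar] roeD(1)[OF b] gX_bounded alg_roeD(1) KX_approx[OF a] roeD(2)[OF b] e])
    then obtain a' b' where ab': "a' \<in> gX U" "b' \<in> alg_roe UNIV" "opnorm (\<lambda>p r. mmul a b p r - mmul a' b' p r) < e"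
      by blast
    show "\<exists>S\<in>gX U. opnorm (\<lambda>p q. mmul a b p q - S p q) < e"
      by (rule bexI[of _ "mmul a' b'"]) (rule ab'(3), rule gX_mmul_right[OF bg ab'(2) ab'(1)])
  qed
  show "mmul b a \<in> KX U"
    unfolding KX_def
  proof (intro CollectI conjI allI impI)
    show "mmul b a \<in> roe UNIV" using roe_mmul[OF bg b ar] .
    fix e :: real assume e: "e > 0"
    have "\<exists>b'\<in>alg_roe UNIV. \<exists>a'\<in>gX U. opnorm (\<lambda>p r. mmul b a p r - mmul b' a' p r) < e"
      by (rule approx_mmul[OF roeD(1)[OF b] roeD(1)[OF ar] alg_roeD(1) gX_bounded roeD(2)[OF b] KX_approx[OF a] e])
    then obtain a' b' where ab': "a' \<in> gX U" "b' \<in> alg_roe UNIV" "opnorm (\<lambda>p r. mmul b a p r - mmul b' a' p r) < e"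
      by blast
    show "\<exists>S\<in>gX U. opnorm (\<lambda>p q. mmul b a p q - S p q) < e"
      by (rule bexI[of _ "mmul b' a'"]) (rule ab'(3), rule gX_mmul_left[OF bg inv ab'(2) ab'(1)])
  qed
next
  fix M :: "'a \<times> nat \<Rightarrow> 'a \<times> nat \<Rightarrow> complex" assume M: "M \<in> roe UNIV" and ap: "\<forall>e>0. \<exists>T\<in>KX U. opnorm (\<lambda>p q. M p q - T p q) < e"
  show "M \<in> KX U"
    unfolding KX_def
  proof (intro CollectI conjI allI impI)
    show "M \<in> roe UNIV" using M .
    fix e :: real assume e: "e > 0"
    obtain T where T: "T \<in> KX U" "opnorm (\<lambda>p q. M p q - T p q) < e/2" using ap[rule_format, of "e/2"] e by auto
    obtain S where S: "S \<in> gX U" "opnorm (\<lambda>p q. T p q - S p q) < e/2" using KX_approx[OF T(1), of "e/2"] e by auto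
    have "opnorm (\<lambda>p q. M p q - S p q) \<le> opnorm (\<lambda>p q. M p q - T p q) + opnorm (\<lambda>p q. T p q - S p q)"
      by (rule approx_trans[OF roeD(1)[OF M] roeD(1)[OF KX_roe[OF T(1)]] gX_bounded[OF S(1)]])
    then show "\<exists>S\<in>gX U. opnorm (\<lambda>p q. M p q - S p q) < e" using S T(2) by (intro bexI[of _ S]) auto
  qed
qed

lemma supp_Y_cond:
  assumes s: "supported_in Y S" and e: "e > 0"
  shows "bclos (subtopology beta_top (betaY Y)) (fst ` supp_eps e S) \<subseteq> U \<inter> betaY Y
     \<longleftrightarrow> bclos beta_top (fst ` supp_eps e S) \<subseteq> U"
proof -
  have B: "fst ` supp_eps e S \<subseteq> Y" by (rule supp_eps_supported[OF e s])
  have eq: "bclos (subtopology beta_top (betaY Y)) (fst ` supp_eps e S) = bclos beta_top (fst ` supp_eps e S)"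
    by (rule bclos_sub[OF B])
  have sub: "bclos beta_top (fst ` supp_eps e S) \<subseteq> betaY Y" unfolding betaY_def by (rule bclos_mono[OF B])
  show ?thesis unfolding eq using sub by blast
qed

lemma gY_eq:
  "{S\<in>alg_roe Y. \<forall>e>0. bclos (subtopology beta_top (betaY Y)) (fst ` supp_eps e S) \<subseteq> U \<inter> betaY Y}
    = gX U \<inter> alg_roe Y"
proof (intro set_eqI iffI)
  fix S assume S: "S \<in> {S\<in>alg_roe Y. \<forall>e>0. bclos (subtopology beta_top (betaY Y)) (fst ` supp_eps e S) \<subseteq> U \<inter> betaY Y}"
  then have a: "S \<in> alg_roe Y" by simp
  have s: "supported_in Y S" using alg_roeD(2)[OF a] .
  have "S \<in> alg_roe UNIV" using alg_roe_mono[of Y UNIV] a by blast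
  moreover have "\<forall>e>0. bclos beta_top (fst ` supp_eps e S) \<subseteq> U"
    using S supp_Y_cond[OF s] by simp
  ultimately show "S \<in> gX U \<inter> alg_roe Y" using a unfolding gX_def by simp
next
  fix S assume S: "S \<in> gX U \<inter> alg_roe Y"
  then have a: "S \<in> alg_roe Y" by simp
  have s: "supported_in Y S" using alg_roeD(2)[OF a] .
  have "\<forall>e>0. bclos beta_top (fst ` supp_eps e S) \<subseteq> U" using S unfolding gX_def by simp
  then have "\<forall>e>0. bclos (subtopology beta_top (betaY Y)) (fst ` supp_eps e S) \<subseteq> U \<inter> betaY Y"
    using supp_Y_cond[OF s] by simp
  then show "S \<in> {S\<in>alg_roe Y. \<forall>e>0. bclos (subtopology beta_top (betaY Y)) (fst ` supp_eps e S) \<subseteq> U \<inter> betaY Y}"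
    using a by simp
qed

lemma J_restrict:
  assumes bg: "bounded_geometry TYPE('a::metric_space)" and J: "isJ (roe UNIV) (gX U) J"
  shows "isJ (roe (Y :: 'a set)) (gX U \<inter> alg_roe Y) (J \<inter> roe Y)"
proof -
  have J1: "J \<subseteq> roe UNIV" and J2: "gX U \<subseteq> J"
    and J3: "\<forall>a\<in>J. \<forall>b\<in>J. (\<lambda>p q. a p q + b p q) \<in> J"
    and J4: "\<forall>c::complex. \<forall>a\<in>J. (\<lambda>p q. c * a p q) \<in> J"
    and J5: "\<forall>a\<in>J. \<forall>b\<in>roe UNIV. mmul a b \<in> J \<and> mmul b a \<in> J"
    and J6: "\<forall>M\<in>roe UNIV. (\<forall>e>0. \<exists>T\<in>J. opnorm (\<lambda>p q. M p q - T p q) < e) \<longrightarrow> M \<in> J"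
    using J unfolding isJ_def by blast+
  have YU: "roe Y \<subseteq> roe UNIV" by (rule roe_mono) simp
  show ?thesis unfolding isJ_def
  proof (intro conjI ballI allI impI)
    show "J \<inter> roe Y \<subseteq> roe Y" by blast
    show "gX U \<inter> alg_roe Y \<subseteq> J \<inter> roe Y" using J2 alg_in_roe by blast
  next
    fix a b assume a: "a \<in> J \<inter> roe Y" and b: "b \<in> J \<inter> roe Y"
    show "(\<lambda>p q. a p q + b p q) \<in> J \<inter> roe Y" using J3 a b roe_add[of a Y b] by blast
  next
    fix c :: complex and a assume a: "a \<in> J \<inter> roe Y"
    show "(\<lambda>p q. c * a p q) \<in> J \<inter> roe Y" using J4 a roe_scale[of a Y c] by blast
  next
    fix a b assume a: "a \<in> J \<inter> roe Y" and b: "b \<in> roe Y"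
    have bU: "b \<in> roe UNIV" using YU b by blast
    have aJ: "a \<in> J" and aY: "a \<in> roe Y" using a by auto
    show "mmul a b \<in> J \<inter> roe Y" using J5 aJ bU roe_mmul[OF bg aY b] by blast
    show "mmul b a \<in> J \<inter> roe Y" using J5 aJ bU roe_mmul[OF bg b aY] by blast
  next
    fix M assume M: "M \<in> roe Y" and ap: "\<forall>e>0. \<exists>T\<in>J \<inter> roe Y. opnorm (\<lambda>p q. M p q - T p q) < e"
    have "\<forall>e>0. \<exists>T\<in>J. opnorm (\<lambda>p q. M p q - T p q) < e" using ap by blast
    moreover have "M \<in> roe UNIV" using YU M by blast
    ultimately have "M \<in> J" using J6 by blast
    then show "M \<in> J \<inter> roe Y" using M by blast
  qed
qed

lemma part_I:
  fixes Y :: "'a::metric_space set" and U :: "'a filter set"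
  assumes bg: "bounded_geometry TYPE('a)" and inv: "invariant U"
  shows "ideal_I (subtopology beta_top (betaY Y)) Y (U \<inter> betaY Y)
           = ideal_I beta_top UNIV U \<inter> roe Y"
proof -
  have IY: "ideal_I (subtopology beta_top (betaY Y)) Y (U \<inter> betaY Y) = closed_ideal_gen (roe Y) (gX U \<inter> alg_roe Y)"
    unfolding ideal_I_def gY_eq ..
  have IX: "ideal_I beta_top UNIV U = closed_ideal_gen (roe UNIV) (gX U)"
    unfolding ideal_I_def gX_def ..
  have KX: "isJ (roe UNIV) (gX U) (KX U)" by (rule KX_isJ[OF bg inv])
  show ?thesis unfolding IY IX
  proof (intro set_eqI iffI)
    fix x assume x: "x \<in> closed_ideal_gen (roe Y) (gX U \<inter> alg_roe Y)"
    have inJ: "x \<in> J \<inter> roe Y" if "isJ (roe UNIV) (gX U) J" for J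
      using cig_lower[OF J_restrict[OF bg that]] x by blast
    have "x \<in> closed_ideal_gen (roe UNIV) (gX U)" by (rule cig_intro) (use inJ in blast)
    moreover have "x \<in> roe Y" using inJ[OF KX] by blast
    ultimately show "x \<in> closed_ideal_gen (roe UNIV) (gX U) \<inter> roe Y" by blast
  next
    fix x assume x: "x \<in> closed_ideal_gen (roe UNIV) (gX U) \<inter> roe Y"
    have xK: "x \<in> KX U" using cig_lower[OF KX] x by blast
    have xY: "x \<in> roe Y" using x by blast
    have xs: "supported_in Y x" by (rule roe_supported[OF xY])
    have xb: "bounded_op x" by (rule roeD(1)[OF xY])
    show "x \<in> closed_ideal_gen (roe Y) (gX U \<inter> alg_roe Y)"
    proof (rule cig_intro)
      fix J assume J: "isJ (roe Y) (gX U \<inter> alg_roe Y) J"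
      have J2: "gX U \<inter> alg_roe Y \<subseteq> J"
        and J6: "\<forall>M\<in>roe Y. (\<forall>e>0. \<exists>T\<in>J. opnorm (\<lambda>p q. M p q - T p q) < e) \<longrightarrow> M \<in> J"
        using J unfolding isJ_def by blast+
      have "\<exists>T\<in>J. opnorm (\<lambda>p q. x p q - T p q) < e" if e: "e > 0" for e
      proof -
        obtain S where S: "S \<in> gX U" "opnorm (\<lambda>p q. x p q - S p q) < e" using KX_approx[OF xK e] by blast
        have Sa: "S \<in> alg_roe UNIV" using gX_alg[OF S(1)] .
        have cY: "cmp Y S \<in> alg_roe Y" using cmp_alg[OF Sa] .
        have cU: "cmp Y S \<in> alg_roe UNIV" using alg_roe_mono[of Y UNIV] cY by blast
        have "bclos beta_top (fst ` supp_eps e' (cmp Y S)) \<subseteq> U" if e': "e' > 0" for e'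
        proof -
          have "bclos beta_top (fst ` supp_eps e' (cmp Y S)) \<subseteq> bclos beta_top (fst ` supp_eps e' S)"
            using supp_eps_cmp[OF e', of Y S] by (intro bclos_mono image_mono)
          also have "\<dots> \<subseteq> U" using gX_cond[OF S(1) e'] .
          finally show ?thesis .
        qed
        then have "cmp Y S \<in> gX U" using cU unfolding gX_def by blast
        then have cJ: "cmp Y S \<in> J" using J2 cY by blast
        have D: "bounded_op (\<lambda>p q. x p q - S p q)" using opnorm_diff[OF xb gX_bounded[OF S(1)]] by simp
        have "opnorm (\<lambda>p q. x p q - cmp Y S p q) = opnorm (\<lambda>p q. cmp Y x p q - cmp Y S p q)"
          unfolding cmp_id[OF xs] ..
        also have "\<dots> = opnorm (cmp Y (\<lambda>p q. x p q - S p q))" unfolding cmp_diff ..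
        also have "\<dots> \<le> opnorm (\<lambda>p q. x p q - S p q)" using cmp_bounded[OF D] by blast
        finally have "opnorm (\<lambda>p q. x p q - cmp Y S p q) < e" using S(2) by linarith
        then show ?thesis using cJ by blast
      qed
      then show "x \<in> J" using J6 xY by blast
    qed
  qed
qed

lemma part_G:
  fixes Y :: "'a::metric_space set" and U :: "'a filter set"
  shows "ideal_G (subtopology beta_top (betaY Y)) Y (U \<inter> betaY Y)
           = ideal_G beta_top UNIV U \<inter> roe Y"
proof (intro set_eqI iffI)
  fix S assume S: "S \<in> ideal_G (subtopology beta_top (betaY Y)) Y (U \<inter> betaY Y)"
  then have SY: "S \<in> roe Y" unfolding ideal_G_def by simp
  have s: "supported_in Y S" by (rule roe_supported[OF SY])
  have "S \<in> roe UNIV" using roe_mono[of Y UNIV] SY by blast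
  moreover have "\<forall>e>0. bclos beta_top (fst ` supp_eps e S) \<subseteq> U"
    using S supp_Y_cond[OF s] unfolding ideal_G_def by simp
  ultimately show "S \<in> ideal_G beta_top UNIV U \<inter> roe Y" using SY unfolding ideal_G_def by simp
next
  fix S assume S: "S \<in> ideal_G beta_top UNIV U \<inter> roe Y"
  then have SY: "S \<in> roe Y" by simp
  have s: "supported_in Y S" by (rule roe_supported[OF SY])
  have "\<forall>e>0. bclos beta_top (fst ` supp_eps e S) \<subseteq> U" using S unfolding ideal_G_def by simp
  then have "\<forall>e>0. bclos (subtopology beta_top (betaY Y)) (fst ` supp_eps e S) \<subseteq> U \<inter> betaY Y"
    using supp_Y_cond[OF s] by simp
  then show "S \<in> ideal_G (subtopology beta_top (betaY Y)) Y (U \<inter> betaY Y)"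
    using SY unfolding ideal_G_def by simp
qed

theorem lemma2p9:
  fixes Y :: "'a::metric_space set" and U :: "'a filter set"
  assumes "bounded_geometry TYPE('a)"
    and "openin beta_top U"
    and "invariant U"
  shows "ideal_I (subtopology beta_top (betaY Y)) Y (U \<inter> betaY Y)
           = ideal_I beta_top UNIV U \<inter> roe Y
       \<and> ideal_G (subtopology beta_top (betaY Y)) Y (U \<inter> betaY Y)
           = ideal_G beta_top UNIV U \<inter> roe Y"
  using part_I[OF assms(1,3), of Y] part_G[of Y U] by simp

end
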